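(* Let $G_1$ and $G_2$ be graphs on $n$ nodes with Laplacian matrices $Q_1,Q_2$, let $k\in\{1,\dots,n\}$, and let $\hat B$ be an $n\times n$ zero-one matrix with exactly $k$ ones in every row and every column. For $p\ge 0$ let $$Q(p)=\begin{bmatrix} Q_1+kpI & -p\hat B\\ -p\hat B^T & Q_2+kpI\end{bmatrix},$$ with eigenvalues $0=\mu_N(p)\le \mu_{N-1}(p)\le\dots\le\mu_1(p)$, $N=2n$. Define the transition threshold $p^*=\sup\big(\{0\}\cup\{p>0:\ \mu_{N-1}(p)=2kp\}\big)$. Then $$p^*\ge \frac{1}{2k}\min\big(\mu_{n-1}(Q_1),\ \mu_{n-1}(Q_2)\big),$$ where $\mu_{n-1}(Q_i)$ denotes the second smallest eigenvalue (algebraic connectivity) of $Q_i$.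
   Context: $Q(p)$ is the Laplacian of the two-layer interdependent network with a $k$-to-$k$ interconnection of weight $p$; $2kp$ is always an eigenvalue of $Q(p)$ (eigenvector $[u^T,-u^T]^T$). The paper describes $p^*$ as the coupling value beyond which $\mu_{N-1}(p)\neq 2kp$; here it is formalized as the supremum above. *)

theory Defs
  imports "Jordan_Normal_Form.Matrix" "Jordan_Normal_Form.Char_Poly"
begin

definition simple_graph :: "nat \<Rightarrow> (nat \<Rightarrow> nat \<Rightarrow> bool) \<Rightarrow> bool" where
  "simple_graph n E \<longleftrightarrow> (\<forall>i<n. \<forall>j<n. E i j = E j i) \<and> (\<forall>i<n. \<not> E i i)"

definition laplacian :: "nat \<Rightarrow> (nat \<Rightarrow> nat \<Rightarrow> bool) \<Rightarrow> real mat" where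
  "laplacian n E = mat n n (\<lambda>(i,j).
      if i = j then real (card {l. l < n \<and> E i l})
      else if E i j then -1 else 0)"

text \<open>Eigenvalues (with algebraic multiplicity) in ascending order: the unique sorted
  list xs with char_poly A = prod (X - x) over xs. (Exists for real symmetric matrices.)\<close>
definition asc_eigs :: "real mat \<Rightarrow> real list" where
  "asc_eigs A = (THE xs. sorted xs \<and> char_poly A = prod_list (map (\<lambda>x. [:-x, 1:]) xs))"

text \<open>Second smallest eigenvalue mu_{m-1} for an m x m matrix (eigenvalues labelled
  0 = mu_m <= mu_{m-1} <= ... <= mu_1).\<close>
definition second_smallest_eig :: "real mat \<Rightarrow> real" where
  "second_smallest_eig A = asc_eigs A ! 1"

definition supra_laplacian :: "nat \<Rightarrow> real mat \<Rightarrow> real mat \<Rightarrow> real mat \<Rightarrow> real \<Rightarrow> real mat" where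
  "supra_laplacian k Q1 Q2 B p =
     four_block_mat (Q1 + (real k * p) \<cdot>\<^sub>m 1\<^sub>m (dim_row Q1)) (- (p \<cdot>\<^sub>m B))
                    (- (p \<cdot>\<^sub>m transpose_mat B)) (Q2 + (real k * p) \<cdot>\<^sub>m 1\<^sub>m (dim_row Q2))"

definition k_regular_01 :: "nat \<Rightarrow> nat \<Rightarrow> real mat \<Rightarrow> bool" where
  "k_regular_01 n k B \<longleftrightarrow> B \<in> carrier_mat n n \<and>
     (\<forall>i<n. \<forall>j<n. B $$ (i,j) = 0 \<or> B $$ (i,j) = 1) \<and>
     (\<forall>i<n. card {j. j < n \<and> B $$ (i,j) = 1} = k) \<and>
     (\<forall>j<n. card {i. i < n \<and> B $$ (i,j) = 1} = k)"

definition transition_threshold :: "nat \<Rightarrow> real mat \<Rightarrow> real mat \<Rightarrow> real mat \<Rightarrow> real" where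
  "transition_threshold k Q1 Q2 B =
     Sup ({0} \<union> {p. p > 0 \<and> second_smallest_eig (supra_laplacian k Q1 Q2 B p) = 2 * real k * p})"

end

theory Submission
  imports Defs
begin


lemma order_linear_factors:
  fixes xs :: "real list"
  shows "order a (\<Prod>x\<leftarrow>xs. [:-x, 1:]) = count (mset xs) a"
proof (induction xs)
  case Nil
  then show ?case by simp
next
  case (Cons x xs)
  have nz: "(\<Prod>x\<leftarrow>xs. [:-x, 1:]) \<noteq> (0::real poly)"
  proof
    assume "(\<Prod>x\<leftarrow>xs. [:-x, 1:]) = (0::real poly)"
    then obtain y where "[:-y, 1:] = (0::real poly)" by (auto simp: prod_list_zero_iff)
    then show False by simp
  qed
  have o1: "order a [:-x, 1:] = (if x = a then 1 else 0)"
  proof (cases "x = a")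
    case True
    then show ?thesis using order_power_n_n[of a 1] by simp
  next
    case False
    then show ?thesis by (simp add: order_0I)
  qed
  have "order a ([:-x, 1:] * (\<Prod>x\<leftarrow>xs. [:-x, 1:])) = order a [:-x, 1:] + order a (\<Prod>x\<leftarrow>xs. [:-x, 1:])"
    using nz by (intro order_mult) (metis mult_eq_0_iff pCons_eq_0_iff zero_neq_one)
  then show ?case using Cons o1 by simp
qed

lemma linear_factors_unique:
  fixes xs ys :: "real list"
  assumes "(\<Prod>x\<leftarrow>xs. [:-x, 1:]) = (\<Prod>x\<leftarrow>ys. [:-x, 1:])"
  shows "mset xs = mset ys"
  by (rule multiset_eqI) (metis assms order_linear_factors)

definition diag_m :: "real list \<Rightarrow> real mat" where
  "diag_m d = mat (length d) (length d) (\<lambda>(i,j). if i = j then d!i else 0)"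

lemma asc_eigs_eqI:
  assumes "char_poly M = (\<Prod>x\<leftarrow>d. [:-x, 1:])"
  shows "asc_eigs M = sort d"
  unfolding asc_eigs_def
proof (rule the_equality)
  show "sorted (sort d) \<and> char_poly M = prod_list (map (\<lambda>x. [:- x, 1:]) (sort d))"
    using assms by (simp add: prod_mset_prod_list[symmetric])
  fix xs assume "sorted xs \<and> char_poly M = prod_list (map (\<lambda>x. [:- x, 1:]) xs)"
  then show "xs = sort d" using linear_factors_unique[of xs d] assms
    by (metis properties_for_sort)
qed


lemma real_sym_eigen:
  fixes M :: "real mat"
  assumes M: "M \<in> carrier_mat N N" and sym: "transpose_mat M = M" and N: "N > 0"
  shows "\<exists>l v. v \<in> carrier_vec N \<and> v \<noteq> 0\<^sub>v N \<and> M *\<^sub>v v = l \<cdot>\<^sub>v v"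
proof -
  let ?Mc = "map_mat complex_of_real M"
  have Mc: "?Mc \<in> carrier_mat N N" using M by simp
  have "degree (char_poly ?Mc) = N" using degree_monic_char_poly[OF Mc] by simp
  then obtain z where z: "poly (char_poly ?Mc) z = 0"
    using fundamental_theorem_of_algebra[of "char_poly ?Mc"] N constant_degree by force
  then have "eigenvalue ?Mc z" using eigenvalue_root_char_poly[OF Mc] by simp
  then obtain v where v: "v \<in> carrier_vec N" "v \<noteq> 0\<^sub>v N" "?Mc *\<^sub>v v = z \<cdot>\<^sub>v v"
    unfolding eigenvalue_def eigenvector_def using Mc by auto
  have symM: "\<And>i j. i < N \<Longrightarrow> j < N \<Longrightarrow> M $$ (i,j) = M $$ (j,i)"
    using sym M by (metis carrier_matD index_transpose_mat(1))
  have row: "\<And>i. i < N \<Longrightarrow> (\<Sum>j<N. of_real (M$$(i,j)) * v$j) = z * v$i"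
  proof -
    fix i assume i: "i < N"
    have "(?Mc *\<^sub>v v) $ i = (\<Sum>j<N. of_real (M$$(i,j)) * v$j)"
      using i M v(1) by (auto simp: scalar_prod_def lessThan_atLeast0)
    then show "(\<Sum>j<N. of_real (M$$(i,j)) * v$j) = z * v$i" using v i by simp
  qed
  define S where "S = (\<Sum>i<N. \<Sum>j<N. cnj (v$i) * (of_real (M$$(i,j)) * v$j))"
  define P where "P = (\<Sum>i<N. cnj (v$i) * v$i)"
  have S1: "S = z * P"
  proof -
    have "S = (\<Sum>i<N. cnj (v$i) * (\<Sum>j<N. of_real (M$$(i,j)) * v$j))"
      unfolding S_def by (simp add: sum_distrib_left)
    also have "\<dots> = (\<Sum>i<N. z * (cnj (v$i) * v$i))"
      by (intro sum.cong refl) (simp add: row)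
    finally show ?thesis unfolding P_def by (simp add: sum_distrib_left)
  qed
  have "cnj S = (\<Sum>i<N. \<Sum>j<N. v$i * (of_real (M$$(i,j)) * cnj (v$j)))"
    unfolding S_def by simp
  also have "\<dots> = (\<Sum>j<N. \<Sum>i<N. v$i * (of_real (M$$(i,j)) * cnj (v$j)))"
    by (rule sum.swap)
  also have "\<dots> = S"
    unfolding S_def by (intro sum.cong refl) (simp add: symM mult.commute mult.left_commute)
  finally have S2: "cnj S = S" .
  have P: "P = of_real (\<Sum>i<N. (cmod (v$i))^2)"
    unfolding P_def by (simp add: complex_norm_square[symmetric] mult.commute del: of_real_power)
  obtain i where i: "i < N" "v $ i \<noteq> 0" using v by (metis carrier_vecD eq_vecI index_zero_vec)
  have "(cmod (v$i))^2 \<le> (\<Sum>i<N. (cmod (v$i))^2)"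
    by (rule member_le_sum) (use i in auto)
  moreover have "(cmod (v$i))^2 > 0" using i by simp
  ultimately have Ppos: "(\<Sum>i<N. (cmod (v$i))^2) > 0" by linarith
  have "cnj z = z"
  proof -
    have "P \<noteq> 0" using P Ppos by (metis of_real_eq_0_iff less_irrefl)
    moreover have "cnj P = P" using P by (metis complex_cnj_complex_of_real)
    moreover have "cnj S = cnj z * cnj P" using S1 by simp
    ultimately show ?thesis using S1 S2 by simp
  qed
  then have "Im (cnj z) = Im z" by simp
  then have "Im z = 0" by simp
  then have zr: "z = of_real (Re z)" by (simp add: complex_eq_iff)
  have "poly (char_poly M) (Re z) = 0"
    using z of_real_hom.char_poly_hom[OF M] zr of_real_hom.poly_map_poly
    by (metis of_real_eq_0_iff)
  then have "eigenvalue M (Re z)" using eigenvalue_root_char_poly[OF M] by simp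
  then show ?thesis unfolding eigenvalue_def eigenvector_def using M by auto
qed


lemma sq_pos: "(x::real) \<noteq> 0 \<Longrightarrow> 0 < x * x" by (metis not_real_square_gt_zero)

lemma delta_sum_l: "(i::nat) < N \<Longrightarrow> (\<Sum>l\<in>{0..<N}. (if i = l then (1::real) else 0) * f l) = f i"
proof -
  assume i: "i < N"
  have "(\<Sum>l\<in>{0..<N}. (if i = l then (1::real) else 0) * f l) = (\<Sum>l\<in>{0..<N}. if l = i then f i else 0)"
    by (intro sum.cong) auto
  then show ?thesis using i by (simp only: sum.delta finite_atLeastLessThan) simp
qed
lemma delta_sum_r: "(j::nat) < N \<Longrightarrow> (\<Sum>l\<in>{0..<N}. f l * (if l = j then (1::real) else 0)) = f j"
proof -
  assume i: "j < N"
  have "(\<Sum>l\<in>{0..<N}. f l * (if l = j then (1::real) else 0)) = (\<Sum>l\<in>{0..<N}. if l = j then f j else 0)"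
    by (intro sum.cong) auto
  then show ?thesis using i by (simp only: sum.delta finite_atLeastLessThan) simp
qed

lemma householder:
  fixes v :: "real vec"
  assumes v: "v \<in> carrier_vec N" and vv: "v \<bullet> v = 1" and N: "0 < N"
  shows "\<exists>W. W \<in> carrier_mat N N \<and> transpose_mat W * W = 1\<^sub>m N \<and> W * transpose_mat W = 1\<^sub>m N
             \<and> (\<forall>i<N. W $$ (i,0) = v $ i)"
proof (cases "\<forall>i<N. v $ i = (if i = 0 then 1 else 0)")
  case True
  then show ?thesis by (intro exI[of _ "1\<^sub>m N"]) auto
next
  case False
  define w where "w = (\<lambda>i. v $ i - (if i = 0 then 1 else 0::real))"
  define ww where "ww = (\<Sum>l\<in>{0..<N}. w l * w l)"
  define c where "c = 2 / ww"
  define W where "W = mat N N (\<lambda>(i,j). (if i = j then 1 else 0) - c * w i * w j)"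
  have vv': "(\<Sum>l\<in>{0..<N}. v$l * v$l) = 1" using vv v by (simp add: scalar_prod_def)
  have "ww = (\<Sum>l\<in>{0..<N}. v$l * v$l - 2 * (if l = 0 then v$l else 0) + (if l = 0 then 1 else 0))"
    unfolding ww_def w_def by (intro sum.cong refl) (auto simp: algebra_simps)
  also have "\<dots> = 2 - 2 * v$0"
    using N by (simp add: sum.distrib sum_subtractf vv' sum_distrib_left[symmetric] sum.delta)
  finally have ww2: "ww = 2 - 2 * v$0" .
  obtain i where i: "i < N" "v $ i \<noteq> (if i = 0 then 1 else 0)" using False by auto
  have "w i \<noteq> 0" using i unfolding w_def by auto
  then have "w i * w i > 0" by (rule sq_pos)
  moreover have "w i * w i \<le> ww" unfolding ww_def
    by (rule member_le_sum) (use i in auto)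
  ultimately have wwpos: "ww > 0" by linarith
  have cw0: "c * w 0 = -1" unfolding c_def w_def using ww2 wwpos by (simp add: field_simps)
  have Wc: "W \<in> carrier_mat N N" unfolding W_def by simp
  have WT: "transpose_mat W = W" unfolding W_def by (rule eq_matI) auto
  have WW: "W * W = 1\<^sub>m N"
  proof (rule eq_matI)
    fix i j assume "i < dim_row (1\<^sub>m N)" "j < dim_col (1\<^sub>m N)"
    then have i: "i < N" and j: "j < N" by auto
    have "(W * W) $$ (i,j) = (\<Sum>l\<in>{0..<N}. ((if i = l then 1 else 0) - c * w i * w l) * ((if l = j then 1 else 0) - c * w l * w j))"
      using i j unfolding W_def by (simp add: scalar_prod_def)
    also have "\<dots> = (\<Sum>l\<in>{0..<N}. (if i = l then 1 else 0) * (if l = j then 1 else 0))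
        - (\<Sum>l\<in>{0..<N}. (if i = l then 1 else 0) * (c * w l * w j))
        - (\<Sum>l\<in>{0..<N}. (c * w i * w l) * (if l = j then 1 else 0))
        + c * c * w i * w j * ww"
      unfolding ww_def by (simp add: algebra_simps sum.distrib sum_subtractf sum_distrib_left)
    also have "\<dots> = (if i = j then 1 else 0) - 2 * c * w i * w j + c * c * w i * w j * ww"
      using i j by (simp add: delta_sum_l delta_sum_r)
    also have "\<dots> = (if i = j then 1 else 0)"
      unfolding c_def using wwpos by (simp add: field_simps)
    finally show "(W * W) $$ (i,j) = 1\<^sub>m N $$ (i,j)" using i j by simp
  qed (use Wc in auto)
  show ?thesis
  proof (intro exI[of _ W] conjI allI impI)
    show "W \<in> carrier_mat N N" by fact
    show "transpose_mat W * W = 1\<^sub>m N" "W * transpose_mat W = 1\<^sub>m N" using WT WW by auto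
    fix i assume i: "i < N"
    have "W $$ (i,0) = (if i = 0 then 1 else 0) - c * w 0 * w i" using i N unfolding W_def by simp
    also have "\<dots> = (if i = 0 then 1 else 0) + w i" using cw0 by (simp add: mult.assoc[symmetric])
    also have "\<dots> = v $ i" unfolding w_def by simp
    finally show "W $$ (i,0) = v $ i" .
  qed
qed


lemma mat_vec_unit0:
  fixes A :: "real mat"
  assumes "A \<in> carrier_mat N N" "i < N" "0 < N"
  shows "(A *\<^sub>v unit_vec N 0) $ i = A $$ (i,0)"
proof -
  have "(A *\<^sub>v unit_vec N 0) $ i = (\<Sum>l\<in>{0..<N}. A $$ (i,l) * (if l = 0 then 1 else 0))"
    using assms by (auto simp: scalar_prod_def unit_vec_def intro!: sum.cong)
  also have "\<dots> = A $$ (i,0)" using assms by (simp add: delta_sum_r)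
  finally show ?thesis .
qed

lemma spectral:
  fixes M :: "real mat"
  assumes "M \<in> carrier_mat N N" "transpose_mat M = M"
  shows "\<exists>U d. U \<in> carrier_mat N N \<and> transpose_mat U * U = 1\<^sub>m N \<and> U * transpose_mat U = 1\<^sub>m N
     \<and> length d = N \<and> transpose_mat U * M * U = diag_m d"
  using assms
proof (induction N arbitrary: M)
  case 0
  then show ?case
    by (intro exI[of _ "1\<^sub>m 0"] exI[of _ "[]"]) (auto simp: diag_m_def intro!: eq_matI)
next
  case (Suc n)
  let ?N = "Suc n"
  have M: "M \<in> carrier_mat ?N ?N" and symM: "transpose_mat M = M" using Suc.prems by auto
  obtain l v where v: "v \<in> carrier_vec ?N" "v \<noteq> 0\<^sub>v ?N" "M *\<^sub>v v = l \<cdot>\<^sub>v v"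
    using real_sym_eigen[OF M symM] by auto
  have vvpos: "v \<bullet> v > 0"
  proof -
    obtain i where i: "i < ?N" "v $ i \<noteq> 0" using v by (metis carrier_vecD eq_vecI index_zero_vec)
    have "v $ i * v $ i \<le> (\<Sum>l\<in>{0..<?N}. v $ l * v $ l)"
      by (rule member_le_sum) (use i in auto)
    moreover have "v $ i * v $ i > 0" using i sq_pos by auto
    ultimately show ?thesis using v by (simp add: scalar_prod_def)
  qed
  define u where "u = (1 / sqrt (v \<bullet> v)) \<cdot>\<^sub>v v"
  have u: "u \<in> carrier_vec ?N" unfolding u_def using v by simp
  have uu: "u \<bullet> u = 1" unfolding u_def using v vvpos
    by (simp add: real_sqrt_mult[symmetric])
  have Mu: "M *\<^sub>v u = l \<cdot>\<^sub>v u" unfolding u_def using mult_mat_vec[OF M v(1)] v(3)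
    by (simp add: smult_smult_assoc mult.commute)
  obtain W where W: "W \<in> carrier_mat ?N ?N" "transpose_mat W * W = 1\<^sub>m ?N" "W * transpose_mat W = 1\<^sub>m ?N"
    "\<forall>i<?N. W $$ (i,0) = u $ i"
    using householder[OF u uu] by auto
  have WT: "transpose_mat W \<in> carrier_mat ?N ?N" using W by simp
  have We0: "W *\<^sub>v unit_vec ?N 0 = u"
    by (rule eq_vecI) (use W u mat_vec_unit0[OF W(1)] in auto)
  define A' where "A' = transpose_mat W * M * W"
  have A': "A' \<in> carrier_mat ?N ?N" unfolding A'_def using W M by simp
  have symA': "transpose_mat A' = A'"
  proof -
    have c1: "transpose_mat W * M \<in> carrier_mat ?N ?N" using W M by simp
    have "transpose_mat A' = transpose_mat W * transpose_mat (transpose_mat W * M)"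
      unfolding A'_def by (rule transpose_mult[OF c1 W(1)])
    also have "transpose_mat (transpose_mat W * M) = transpose_mat M * W"
      using transpose_mult[OF WT M] by simp
    finally show ?thesis unfolding A'_def using symM W M WT
      by (simp add: assoc_mult_mat[of _ ?N ?N _ ?N _ ?N])
  qed
  have "A' *\<^sub>v unit_vec ?N 0 = transpose_mat W *\<^sub>v (M *\<^sub>v (W *\<^sub>v unit_vec ?N 0))"
    unfolding A'_def using W M by (simp add: assoc_mult_mat_vec[of _ ?N ?N _ ?N])
  also have "\<dots> = l \<cdot>\<^sub>v (transpose_mat W *\<^sub>v (W *\<^sub>v unit_vec ?N 0))"
    unfolding We0 Mu using mult_mat_vec[OF WT u] by simp
  also have "\<dots> = l \<cdot>\<^sub>v unit_vec ?N 0"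
    using W by (simp add: assoc_mult_mat_vec[of _ ?N ?N _ ?N, symmetric])
  finally have A'e0: "A' *\<^sub>v unit_vec ?N 0 = l \<cdot>\<^sub>v unit_vec ?N 0" .
  have A'col: "\<And>i. i < ?N \<Longrightarrow> A' $$ (i,0) = (if i = 0 then l else 0)"
  proof -
    fix i assume i: "i < ?N"
    have "A' $$ (i,0) = (A' *\<^sub>v unit_vec ?N 0) $ i" using mat_vec_unit0[OF A' i] by simp
    then show "A' $$ (i,0) = (if i = 0 then l else 0)" unfolding A'e0 using i by simp
  qed
  have A'sym: "\<And>i j. i < ?N \<Longrightarrow> j < ?N \<Longrightarrow> A' $$ (i,j) = A' $$ (j,i)"
    using symA' A' by (metis carrier_matD index_transpose_mat(1))
  define A3 where "A3 = mat n n (\<lambda>(i,j). A' $$ (Suc i, Suc j))"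
  have A3: "A3 \<in> carrier_mat n n" unfolding A3_def by simp
  have symA3: "transpose_mat A3 = A3" unfolding A3_def
    by (rule eq_matI) (auto intro: A'sym)
  obtain U3 d3 where U3: "U3 \<in> carrier_mat n n" "transpose_mat U3 * U3 = 1\<^sub>m n" "U3 * transpose_mat U3 = 1\<^sub>m n"
    "length d3 = n" "transpose_mat U3 * A3 * U3 = diag_m d3"
    using Suc.IH[OF A3 symA3] by auto
  define A1 where "A1 = mat 1 1 (\<lambda>_. l)"
  have A1: "A1 \<in> carrier_mat 1 1" unfolding A1_def by simp
  have A'blk: "A' = four_block_mat A1 (0\<^sub>m 1 n) (0\<^sub>m n 1) A3"
  proof (rule eq_matI)
    fix i j assume "i < dim_row (four_block_mat A1 (0\<^sub>m 1 n) (0\<^sub>m n 1) A3)"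
      "j < dim_col (four_block_mat A1 (0\<^sub>m 1 n) (0\<^sub>m n 1) A3)"
    then have i: "i < ?N" and j: "j < ?N" using A1 A3 by auto
    show "A' $$ (i, j) = four_block_mat A1 (0\<^sub>m 1 n) (0\<^sub>m n 1) A3 $$ (i, j)"
    proof (cases "i = 0")
      case True
      then show ?thesis using j A'col[OF j] A'sym[OF i j] A1 A3 unfolding A1_def by auto
    next
      case False
      then show ?thesis using i j A'col[OF i] A1 A3 unfolding A1_def A3_def
        by (cases "j = 0") (auto simp: not0_implies_Suc)
    qed
  qed (use A' A1 A3 in auto)
  define V where "V = four_block_mat (1\<^sub>m 1) (0\<^sub>m 1 n) (0\<^sub>m n 1) U3"
  have V: "V \<in> carrier_mat ?N ?N" unfolding V_def using U3 four_block_carrier_mat[of "1\<^sub>m 1" 1 1 U3 n n "0\<^sub>m 1 n" "0\<^sub>m n 1"] by simp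
  have VT: "transpose_mat V = four_block_mat (1\<^sub>m 1) (0\<^sub>m 1 n) (0\<^sub>m n 1) (transpose_mat U3)"
    unfolding V_def using U3 by (simp add: transpose_four_block_mat[of _ 1 1 _ n _ n])
  have U3T: "transpose_mat U3 \<in> carrier_mat n n" using U3 by simp
  have VTV: "transpose_mat V * V = 1\<^sub>m ?N"
    unfolding VT unfolding V_def using U3 U3T
    by (simp add: mult_four_block_mat[of _ 1 1 _ n _ n _ _ 1 _ n])
  have VVT: "V * transpose_mat V = 1\<^sub>m ?N"
    unfolding VT unfolding V_def using U3 U3T
    by (simp add: mult_four_block_mat[of _ 1 1 _ n _ n _ _ 1 _ n])
  have D3: "diag_m d3 \<in> carrier_mat n n" using U3(4) by (simp add: diag_m_def)
  have VTA'V: "transpose_mat V * A' * V = diag_m (l # d3)"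
  proof -
    have "transpose_mat V * A' * V = four_block_mat A1 (0\<^sub>m 1 n) (0\<^sub>m n 1) (transpose_mat U3 * A3 * U3)"
      unfolding VT unfolding V_def A'blk using U3 U3T A1 A3 D3
      by (simp add: mult_four_block_mat[of _ 1 1 _ n _ n _ _ 1 _ n])
    also have "\<dots> = diag_m (l # d3)"
      unfolding U3(5) using U3(4) unfolding diag_m_def A1_def
      by (intro eq_matI) (auto simp: nth_Cons')
    finally show ?thesis .
  qed
  define U where "U = W * V"
  have U: "U \<in> carrier_mat ?N ?N" unfolding U_def using W V by simp
  have UT: "transpose_mat U = transpose_mat V * transpose_mat W"
    unfolding U_def using W V by (simp add: transpose_mult[of _ ?N ?N])
  have VTc: "transpose_mat V \<in> carrier_mat ?N ?N" using V by simp
  show ?case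
  proof (intro exI[of _ U] exI[of _ "l # d3"] conjI)
    show "U \<in> carrier_mat ?N ?N" by fact
    show "length (l # d3) = ?N" using U3 by simp
    have WVc: "W * V \<in> carrier_mat ?N ?N" using W V by simp
    have "transpose_mat U * U = transpose_mat V * (transpose_mat W * (W * V))"
      unfolding UT unfolding U_def by (rule assoc_mult_mat[OF VTc WT WVc])
    also have "transpose_mat W * (W * V) = (transpose_mat W * W) * V"
      by (rule assoc_mult_mat[OF WT W(1) V, symmetric])
    finally show "transpose_mat U * U = 1\<^sub>m ?N" using W(2) VTV V by simp
    have WTc: "V * transpose_mat V \<in> carrier_mat ?N ?N" using V by simp
    have "U * transpose_mat U = W * (V * (transpose_mat V * transpose_mat W))"
      unfolding UT unfolding U_def by (rule assoc_mult_mat[OF W(1) V, of _ ?N]) (use VTc WT in simp)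
    also have "V * (transpose_mat V * transpose_mat W) = (V * transpose_mat V) * transpose_mat W"
      by (rule assoc_mult_mat[OF V VTc WT, symmetric])
    finally show "U * transpose_mat U = 1\<^sub>m ?N" using W(3) VVT WT by simp
    have "transpose_mat U * M * U = transpose_mat V * A' * V"
      unfolding UT unfolding U_def A'_def using W V VTc WT M
      by (simp add: assoc_mult_mat[of _ ?N ?N _ ?N _ ?N])
    then show "transpose_mat U * M * U = diag_m (l # d3)" using VTA'V by simp
  qed
qed


lemma card_filter_sort:
  "card {i. i < length d \<and> P (d!i)} = length (filter P (sort d))"
proof -
  have "length (filter P (sort d)) = length (filter P d)"
    by (metis mset_filter mset_sort size_mset)
  then show ?thesis by (simp add: length_filter_conv_card)
qed

lemma sorted_filter_lt:
  fixes s :: "real list"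
  assumes "sorted s" "2 \<le> length s"
  shows "length (filter (\<lambda>x. x < s!1) s) \<le> 1"
proof -
  obtain a b r where s: "s = a # b # r" using assms(2)
    by (metis One_nat_def Suc_1 Suc_le_length_iff)
  have "\<forall>x\<in>set r. b \<le> x" using assms(1) s by auto
  then have "filter (\<lambda>x. x < b) r = []" by (auto simp: filter_empty_conv)
  then show ?thesis using s by simp
qed

lemma sorted_filter_le:
  fixes s :: "real list"
  assumes "sorted s" "2 \<le> length s"
  shows "2 \<le> length (filter (\<lambda>x. x \<le> s!1) s)"
proof -
  obtain a b r where s: "s = a # b # r" using assms(2)
    by (metis One_nat_def Suc_1 Suc_le_length_iff)
  have "a \<le> b" using assms(1) s by auto
  then show ?thesis using s by simp
qed

lemma cnt1:
  fixes d :: "real list"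
  assumes "length d = N" "2 \<le> N"
  shows "\<exists>i0<N. \<forall>i<N. i \<noteq> i0 \<longrightarrow> sort d ! 1 \<le> d!i"
proof -
  let ?S = "{i. i < length d \<and> d!i < sort d ! 1}"
  have "card ?S \<le> 1" using card_filter_sort[of d "\<lambda>x. x < sort d ! 1"] sorted_filter_lt[of "sort d"] assms by simp
  have fin: "finite ?S" by simp
  show ?thesis
  proof (cases "?S = {}")
    case True
    have "\<forall>i<N. sort d ! 1 \<le> d!i"
    proof (intro allI impI)
      fix i assume i: "i < N"
      then have "i \<notin> ?S" using True by blast
      then show "sort d ! 1 \<le> d!i" using i assms by (simp add: not_less)
    qed
    then show ?thesis using assms by (intro exI[of _ 0]) auto
  next
    case False
    then obtain i0 where i0: "i0 \<in> ?S" by blast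
    have "\<forall>i<N. i \<noteq> i0 \<longrightarrow> sort d ! 1 \<le> d!i"
    proof (intro allI impI)
      fix i assume i: "i < N" "i \<noteq> i0"
      show "sort d ! 1 \<le> d!i"
      proof (rule ccontr)
        assume "\<not> sort d ! 1 \<le> d!i"
        then have "{i0, i} \<subseteq> ?S" using i i0 assms by auto
        then have "card {i0, i} \<le> card ?S" by (rule card_mono[OF fin])
        then show False using i \<open>card ?S \<le> 1\<close> by simp
      qed
    qed
    then show ?thesis using i0 assms by auto
  qed
qed

lemma cnt2:
  fixes d :: "real list"
  assumes "length d = N" "2 \<le> N"
  shows "\<exists>i0<N. \<exists>i1<N. i0 \<noteq> i1 \<and> d!i0 \<le> sort d ! 1 \<and> d!i1 \<le> sort d ! 1"
proof -
  let ?S = "{i. i < length d \<and> d!i \<le> sort d ! 1}"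
  have "2 \<le> card ?S" using card_filter_sort[of d "\<lambda>x. x \<le> sort d ! 1"] sorted_filter_le[of "sort d"] assms by simp
  then have "\<not> card ?S \<le> Suc 0" by simp
  then obtain i0 i1 where "i0 \<in> ?S" "i1 \<in> ?S" "i0 \<noteq> i1"
    using card_le_Suc0_iff_eq[of ?S] by auto
  then show ?thesis using assms by auto
qed

lemma min0:
  fixes d :: "real list"
  assumes "i < length d"
  shows "sort d ! 0 \<le> d!i"
proof -
  have "d!i \<in> set (sort d)" using assms by simp
  then obtain j where j: "j < length (sort d)" "sort d ! j = d!i" by (metis in_set_conv_nth)
  then show ?thesis using sorted_nth_mono[of "sort d" 0 j] by simp
qed



lemma sum_single:
  fixes f :: "nat \<Rightarrow> real"
  assumes "i0 < N" "\<And>i. i < N \<Longrightarrow> i \<noteq> i0 \<Longrightarrow> f i = 0"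
  shows "(\<Sum>i\<in>{0..<N}. f i) = f i0"
proof -
  have "(\<Sum>i\<in>{0..<N}. f i) = (\<Sum>i\<in>{0..<N}. if i = i0 then f i0 else 0)"
    using assms by (intro sum.cong) auto
  then show ?thesis using assms by (simp only: sum.delta finite_atLeastLessThan) simp
qed

lemma sum_two:
  fixes g :: "nat \<Rightarrow> real"
  assumes "i0 < N" "i1 < N" "i0 \<noteq> i1"
  shows "(\<Sum>i\<in>{0..<N}. (if i = i0 then a else if i = i1 then b else 0) * g i) = a * g i0 + b * g i1"
proof -
  have "(\<Sum>i\<in>{0..<N}. (if i = i0 then a else if i = i1 then b else 0) * g i)
      = (\<Sum>i\<in>{0..<N}. (if i = i0 then a * g i0 else 0) + (if i = i1 then b * g i1 else 0))"
    using assms by (intro sum.cong) auto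
  also have "\<dots> = a * g i0 + b * g i1"
    using assms by (simp only: sum.distrib sum.delta finite_atLeastLessThan) simp
  finally show ?thesis .
qed

lemma coordL:
  fixes d :: "real list" and y z :: "nat \<Rightarrow> real"
  assumes len: "length d = N" and N: "2 \<le> N"
    and dz: "\<And>i. i < N \<Longrightarrow> d!i * z i = \<mu> * z i"
    and znz: "j < N" "z j \<noteq> 0"
    and mu: "\<mu> \<le> sort d ! 0"
    and orth: "(\<Sum>i\<in>{0..<N}. y i * z i) = 0"
  shows "sort d ! 1 * (\<Sum>i\<in>{0..<N}. y i * y i) \<le> (\<Sum>i\<in>{0..<N}. d!i * (y i * y i))"
proof -
  let ?s1 = "sort d ! 1"
  obtain i0 where i0: "i0 < N" "\<And>i. i < N \<Longrightarrow> i \<noteq> i0 \<Longrightarrow> ?s1 \<le> d!i"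
    using cnt1[OF len N] by auto
  have key: "\<And>i. i < N \<Longrightarrow> 0 \<le> (d!i - ?s1) * (y i * y i)"
  proof -
    fix i assume i: "i < N"
    show "0 \<le> (d!i - ?s1) * (y i * y i)"
    proof (cases "?s1 \<le> d!i")
      case True
      then show ?thesis by simp
    next
      case False
      then have ii0: "i = i0" using i0 i by force
      have zl: "\<And>l. l < N \<Longrightarrow> l \<noteq> i0 \<Longrightarrow> z l = 0"
      proof (rule ccontr)
        fix l assume l: "l < N" "l \<noteq> i0" "z l \<noteq> 0"
        then have "d!l = \<mu>" using dz[OF l(1)] by simp
        moreover have "sort d ! 0 \<le> d!i" using min0[of i d] i len by simp
        moreover have "?s1 \<le> d!l" using i0(2) l by simp
        ultimately show False using mu False by linarith
      qed
      have "j = i0" using zl znz by blast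
      have "(\<Sum>i\<in>{0..<N}. y i * z i) = y i0 * z i0"
        by (rule sum_single[OF i0(1)]) (use zl in simp)
      then have "y i0 = 0" using orth znz \<open>j = i0\<close> by simp
      then show ?thesis using ii0 by simp
    qed
  qed
  have "0 \<le> (\<Sum>i\<in>{0..<N}. (d!i - ?s1) * (y i * y i))"
    by (rule sum_nonneg) (use key in auto)
  also have "\<dots> = (\<Sum>i\<in>{0..<N}. d!i * (y i * y i)) - ?s1 * (\<Sum>i\<in>{0..<N}. y i * y i)"
    by (simp add: algebra_simps sum_subtractf sum_distrib_left)
  finally show ?thesis by simp
qed

lemma coordL':
  fixes d :: "real list" and z :: "nat \<Rightarrow> real"
  assumes len: "length d = N" and N: "2 \<le> N"
    and hyp: "\<And>y. (\<Sum>i\<in>{0..<N}. y i * z i) = 0 \<Longrightarrow>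
       c * (\<Sum>i\<in>{0..<N}. y i * y i) \<le> (\<Sum>i\<in>{0..<N}. d!i * (y i * y i))"
  shows "c \<le> sort d ! 1"
proof -
  let ?s1 = "sort d ! 1"
  obtain i0 i1 where ii: "i0 < N" "i1 < N" "i0 \<noteq> i1" "d!i0 \<le> ?s1" "d!i1 \<le> ?s1"
    using cnt2[OF len N] by auto
  obtain a b where ab: "a * z i0 + b * z i1 = 0" "a * a + b * b > 0"
  proof (cases "z i0 = 0 \<and> z i1 = 0")
    case True
    then show ?thesis using that[of 1 0] by simp
  next
    case False
    have "z i1 * z i1 + (- z i0) * (- z i0) > 0"
      using False by (metis add_pos_nonneg add_nonneg_pos mult_minus_left mult_minus_right
          minus_minus sq_pos zero_le_square)
    then show ?thesis using that[of "z i1" "- z i0"] by (simp add: algebra_simps)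
  qed
  define y where "y = (\<lambda>i. if i = i0 then a else if i = i1 then b else (0::real))"
  have yz: "(\<Sum>i\<in>{0..<N}. y i * z i) = a * z i0 + b * z i1"
    unfolding y_def by (rule sum_two[OF ii(1-3)])
  have yy: "(\<Sum>i\<in>{0..<N}. y i * y i) = a * a + b * b"
  proof -
    have "(\<Sum>i\<in>{0..<N}. y i * y i) = (\<Sum>i\<in>{0..<N}. (if i = i0 then a else if i = i1 then b else 0) * y i)"
      unfolding y_def by simp
    also have "\<dots> = a * y i0 + b * y i1" by (rule sum_two[OF ii(1-3)])
    finally show ?thesis unfolding y_def using ii by simp
  qed
  have dyy: "(\<Sum>i\<in>{0..<N}. d!i * (y i * y i)) = d!i0 * (a * a) + d!i1 * (b * b)"
  proof -
    have "(\<Sum>i\<in>{0..<N}. d!i * (y i * y i)) = (\<Sum>i\<in>{0..<N}. (if i = i0 then a else if i = i1 then b else 0) * (d!i * y i))"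
      unfolding y_def by (intro sum.cong) auto
    also have "\<dots> = a * (d!i0 * y i0) + b * (d!i1 * y i1)" by (rule sum_two[OF ii(1-3)])
    finally show ?thesis unfolding y_def using ii by (simp add: algebra_simps)
  qed
  have "c * (a * a + b * b) \<le> d!i0 * (a * a) + d!i1 * (b * b)"
    using hyp[of y] yz yy dyy ab by simp
  also have "\<dots> \<le> ?s1 * (a * a) + ?s1 * (b * b)"
    using ii by (intro add_mono mult_right_mono) auto
  finally have "c * (a * a + b * b) \<le> ?s1 * (a * a + b * b)" by (simp add: algebra_simps)
  then show ?thesis using ab(2) by simp
qed

lemma coordL'':
  fixes d :: "real list" and y z :: "nat \<Rightarrow> real"
  assumes len: "length d = N" and N: "2 \<le> N"
    and dz: "\<And>i. i < N \<Longrightarrow> d!i * z i = 0"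
    and znz: "j < N" "z j \<noteq> 0"
    and ynz: "k < N" "y k \<noteq> 0"
    and orth: "(\<Sum>i\<in>{0..<N}. y i * z i) = 0"
    and hy: "(\<Sum>i\<in>{0..<N}. d!i * (y i * y i)) \<le> c * (\<Sum>i\<in>{0..<N}. y i * y i)"
    and c: "0 \<le> c"
  shows "sort d ! 1 \<le> c"
proof -
  let ?s1 = "sort d ! 1"
  obtain i0 where i0: "i0 < N" "\<And>i. i < N \<Longrightarrow> i \<noteq> i0 \<Longrightarrow> ?s1 \<le> d!i"
    using cnt1[OF len N] by auto
  show ?thesis
  proof (cases "z i0 = 0")
    case True
    then have "j \<noteq> i0" using znz by auto
    then have "?s1 \<le> d!j" using i0 znz by simp
    moreover have "d!j = 0" using dz[OF znz(1)] znz by simp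
    ultimately show ?thesis using c by simp
  next
    case False
    let ?a = "y i0" and ?b = "z i0"
    define x where "x = (\<lambda>i. ?a * z i - ?b * y i)"
    have Y: "(\<Sum>i\<in>{0..<N}. y i * y i) > 0"
    proof -
      have "y k * y k \<le> (\<Sum>i\<in>{0..<N}. y i * y i)"
        by (rule member_le_sum) (use ynz in auto)
      moreover have "y k * y k > 0" using ynz sq_pos by auto
      ultimately show ?thesis by linarith
    qed
    have dx: "\<And>i. i < N \<Longrightarrow> d!i * (x i * x i) = (?b * ?b) * (d!i * (y i * y i))"
    proof -
      fix i assume i: "i < N"
      have "d!i * (x i * x i) = ?a * ?a * (d!i * z i) * z i - 2 * ?a * ?b * (d!i * z i) * y i + ?b * ?b * (d!i * (y i * y i))"
        unfolding x_def by (simp add: algebra_simps)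
      then show "d!i * (x i * x i) = (?b * ?b) * (d!i * (y i * y i))" using dz[OF i] by simp
    qed
    have sdx: "(\<Sum>i\<in>{0..<N}. d!i * (x i * x i)) = (?b * ?b) * (\<Sum>i\<in>{0..<N}. d!i * (y i * y i))"
      by (simp add: dx sum_distrib_left)
    have sx: "(\<Sum>i\<in>{0..<N}. x i * x i) = ?a * ?a * (\<Sum>i\<in>{0..<N}. z i * z i)
        - 2 * ?a * ?b * (\<Sum>i\<in>{0..<N}. y i * z i) + ?b * ?b * (\<Sum>i\<in>{0..<N}. y i * y i)"
      unfolding x_def by (simp add: algebra_simps sum.distrib sum_subtractf sum_distrib_left)
    have Z: "0 \<le> (\<Sum>i\<in>{0..<N}. z i * z i)" by (rule sum_nonneg) simp
    have sxge: "?b * ?b * (\<Sum>i\<in>{0..<N}. y i * y i) \<le> (\<Sum>i\<in>{0..<N}. x i * x i)"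
      using sx orth Z by (simp add: mult_nonneg_nonneg)
    have bb: "?b * ?b > 0" using False sq_pos by auto
    have X: "(\<Sum>i\<in>{0..<N}. x i * x i) > 0" using sxge bb Y
      by (meson less_le_trans mult_pos_pos)
    have x0: "x i0 = 0" unfolding x_def by simp
    have "?s1 * (\<Sum>i\<in>{0..<N}. x i * x i) \<le> (\<Sum>i\<in>{0..<N}. d!i * (x i * x i))"
    proof -
      have "0 \<le> (\<Sum>i\<in>{0..<N}. (d!i - ?s1) * (x i * x i))"
      proof (rule sum_nonneg)
        fix i assume "i \<in> {0..<N}"
        then have i: "i < N" by simp
        show "0 \<le> (d!i - ?s1) * (x i * x i)"
        proof (cases "i = i0")
          case True
          then show ?thesis using x0 by simp
        next
          case False
          then have "0 \<le> d!i - ?s1" using i0(2)[OF i] by simp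
          then show ?thesis by simp
        qed
      qed
      then show ?thesis by (simp add: algebra_simps sum_subtractf sum_distrib_left)
    qed
    also have "\<dots> \<le> (?b * ?b) * (c * (\<Sum>i\<in>{0..<N}. y i * y i))"
      unfolding sdx using hy bb by (intro mult_left_mono) auto
    also have "\<dots> \<le> c * (\<Sum>i\<in>{0..<N}. x i * x i)"
      using sxge c by (simp add: algebra_simps mult_left_mono)
    finally show ?thesis using X by simp
  qed
qed


lemma spectral_coords:
  fixes M :: "real mat"
  assumes M: "M \<in> carrier_mat N N" and sym: "transpose_mat M = M"
  obtains U d where "U \<in> carrier_mat N N" "length d = N" "asc_eigs M = sort d"
    "\<And>x x'. x \<in> carrier_vec N \<Longrightarrow> x' \<in> carrier_vec N \<Longrightarrow>
        x \<bullet> x' = (\<Sum>i\<in>{0..<N}. (transpose_mat U *\<^sub>v x) $ i * (transpose_mat U *\<^sub>v x') $ i)"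
    "\<And>x. x \<in> carrier_vec N \<Longrightarrow>
        x \<bullet> (M *\<^sub>v x) = (\<Sum>i\<in>{0..<N}. d!i * ((transpose_mat U *\<^sub>v x) $ i * (transpose_mat U *\<^sub>v x) $ i))"
    "\<And>x i. x \<in> carrier_vec N \<Longrightarrow> i < N \<Longrightarrow>
        (transpose_mat U *\<^sub>v (M *\<^sub>v x)) $ i = d!i * (transpose_mat U *\<^sub>v x) $ i"
    "\<And>y. transpose_mat U *\<^sub>v (U *\<^sub>v vec N y) = vec N y"
proof -
  obtain U d where U: "U \<in> carrier_mat N N" "transpose_mat U * U = 1\<^sub>m N" "U * transpose_mat U = 1\<^sub>m N"
     "length d = N" "transpose_mat U * M * U = diag_m d"
    using spectral[OF M sym] by blast
  have UT: "transpose_mat U \<in> carrier_mat N N" using U by simp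
  have D: "diag_m d \<in> carrier_mat N N" using U(4) by (simp add: diag_m_def)
  have MD: "M = U * diag_m d * transpose_mat U"
  proof -
    have "U * diag_m d * transpose_mat U = U * (transpose_mat U * M * U) * transpose_mat U"
      by (simp only: U(5))
    also have "\<dots> = (U * transpose_mat U) * M * (U * transpose_mat U)"
      using U(1) UT M by (simp add: assoc_mult_mat[of _ N N _ N _ N])
    also have "\<dots> = M" using U(3) M by simp
    finally show ?thesis by simp
  qed
  have sim: "similar_mat M (diag_m d)"
    unfolding similar_mat_def similar_mat_wit_def
    by (intro exI[of _ U] exI[of _ "transpose_mat U"]) (use U UT M D MD in auto)
  have ut: "upper_triangular (diag_m d)" unfolding upper_triangular_def diag_m_def by auto
  have dm: "diag_mat (diag_m d) = d" unfolding diag_mat_def diag_m_def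
    by (rule nth_equalityI) auto
  have cp: "char_poly M = (\<Prod>x\<leftarrow>d. [:-x, 1:])"
    using char_poly_similar[OF sim] char_poly_upper_triangular[OF D ut] dm by simp
  have asc: "asc_eigs M = sort d" by (rule asc_eigs_eqI[OF cp])
  have ip: "x \<bullet> x' = (\<Sum>i\<in>{0..<N}. (transpose_mat U *\<^sub>v x) $ i * (transpose_mat U *\<^sub>v x') $ i)"
    if x: "x \<in> carrier_vec N" and x': "x' \<in> carrier_vec N" for x x'
  proof -
    have "x' = U *\<^sub>v (transpose_mat U *\<^sub>v x')"
      using U(3) U UT x' by (simp add: assoc_mult_mat_vec[of _ N N _ N, symmetric])
    then have "x \<bullet> x' = x \<bullet> (U *\<^sub>v (transpose_mat U *\<^sub>v x'))" by simp
    also have "\<dots> = (transpose_mat U *\<^sub>v x) \<bullet> (transpose_mat U *\<^sub>v x')"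
      using transpose_vec_mult_scalar[OF U(1), of "transpose_mat U *\<^sub>v x'" x] UT x' x by simp
    finally show ?thesis using UT by (simp add: scalar_prod_def)
  qed
  have Mv: "transpose_mat U *\<^sub>v (M *\<^sub>v x) = diag_m d *\<^sub>v (transpose_mat U *\<^sub>v x)"
    if x: "x \<in> carrier_vec N" for x
  proof -
    have "transpose_mat U *\<^sub>v (M *\<^sub>v x) = (transpose_mat U * M * U) *\<^sub>v (transpose_mat U *\<^sub>v x)"
    proof -
      have "(transpose_mat U * M * U) *\<^sub>v (transpose_mat U *\<^sub>v x) = (transpose_mat U * M) *\<^sub>v ((U * transpose_mat U) *\<^sub>v x)"
        using U(1) UT M x by (simp add: assoc_mult_mat_vec[of _ N N _ N])
      then show ?thesis using U(3) U(1) UT M x by (simp add: assoc_mult_mat_vec[of _ N N _ N])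
    qed
    then show ?thesis by (simp only: U(5))
  qed
  have Dv: "(diag_m d *\<^sub>v y) $ i = d!i * y $ i" if y: "y \<in> carrier_vec N" and i: "i < N" for y i
  proof -
    have "(diag_m d *\<^sub>v y) $ i = (\<Sum>l\<in>{0..<N}. (if i = l then d!i else 0) * y $ l)"
      using y i U(4) by (auto simp: scalar_prod_def diag_m_def intro!: sum.cong)
    also have "\<dots> = (\<Sum>l\<in>{0..<N}. (if i = l then 1 else 0) * (d!i * y $ l))"
      by (intro sum.cong) auto
    also have "\<dots> = d!i * y $ i" using i by (rule delta_sum_l)
    finally show ?thesis .
  qed
  show ?thesis
  proof (rule that[OF U(1) U(4) asc])
    show "x \<bullet> x' = (\<Sum>i\<in>{0..<N}. (transpose_mat U *\<^sub>v x) $ i * (transpose_mat U *\<^sub>v x') $ i)"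
      if "x \<in> carrier_vec N" "x' \<in> carrier_vec N" for x x' using ip that by blast
    show "(transpose_mat U *\<^sub>v (M *\<^sub>v x)) $ i = d!i * (transpose_mat U *\<^sub>v x) $ i"
      if "x \<in> carrier_vec N" "i < N" for x i using Mv[OF that(1)] Dv[of _ i] that UT by simp
    show "x \<bullet> (M *\<^sub>v x) = (\<Sum>i\<in>{0..<N}. d!i * ((transpose_mat U *\<^sub>v x) $ i * (transpose_mat U *\<^sub>v x) $ i))"
      if x: "x \<in> carrier_vec N" for x
    proof -
      have "x \<bullet> (M *\<^sub>v x) = (\<Sum>i\<in>{0..<N}. (transpose_mat U *\<^sub>v x) $ i * (transpose_mat U *\<^sub>v (M *\<^sub>v x)) $ i)"
        using ip[OF x] x M by simp
      also have "\<dots> = (\<Sum>i\<in>{0..<N}. d!i * ((transpose_mat U *\<^sub>v x) $ i * (transpose_mat U *\<^sub>v x) $ i))"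
        using Mv[OF x] Dv UT x by (intro sum.cong) (auto simp: algebra_simps)
      finally show ?thesis .
    qed
    show "transpose_mat U *\<^sub>v (U *\<^sub>v vec N y) = vec N y" for y
      using U(2) U UT by (simp add: assoc_mult_mat_vec[of _ N N _ N, symmetric])
  qed
qed


lemma vv_pos:
  fixes v :: "real vec"
  assumes v: "v \<in> carrier_vec N" "v \<noteq> 0\<^sub>v N"
  shows "v \<bullet> v > 0"
proof -
  obtain i where i: "i < N" "v $ i \<noteq> 0" using v by (metis carrier_vecD eq_vecI index_zero_vec)
  have "v $ i * v $ i \<le> (\<Sum>l\<in>{0..<N}. v $ l * v $ l)"
    by (rule member_le_sum) (use i in auto)
  moreover have "v $ i * v $ i > 0" using i sq_pos by auto
  ultimately show ?thesis using v by (simp add: scalar_prod_def)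
qed

lemma nz_coord:
  fixes z :: "nat \<Rightarrow> real"
  assumes "(\<Sum>i\<in>{0..<N}. z i * z i) > 0"
  shows "\<exists>j<N. z j \<noteq> 0"
proof (rule ccontr)
  assume "\<not> (\<exists>j<N. z j \<noteq> 0)"
  then have "(\<Sum>i\<in>{0..<N}. z i * z i) = 0" by (intro sum.neutral) auto
  then show False using assms by simp
qed

lemma lemL0:
  fixes M :: "real mat"
  assumes M: "M \<in> carrier_mat N N" and sym: "transpose_mat M = M" and N: "2 \<le> N"
    and v: "v \<in> carrier_vec N" "v \<noteq> 0\<^sub>v N" "M *\<^sub>v v = \<mu> \<cdot>\<^sub>v v"
    and mu: "\<mu> \<le> asc_eigs M ! 0"
    and u: "u \<in> carrier_vec N" "u \<bullet> v = 0"
  shows "second_smallest_eig M * (u \<bullet> u) \<le> u \<bullet> (M *\<^sub>v u)"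
proof -
  obtain U d where U: "U \<in> carrier_mat N N" "length d = N" "asc_eigs M = sort d"
    and ip: "\<And>x x'. x \<in> carrier_vec N \<Longrightarrow> x' \<in> carrier_vec N \<Longrightarrow>
        x \<bullet> x' = (\<Sum>i\<in>{0..<N}. (transpose_mat U *\<^sub>v x) $ i * (transpose_mat U *\<^sub>v x') $ i)"
    and qf: "\<And>x. x \<in> carrier_vec N \<Longrightarrow>
        x \<bullet> (M *\<^sub>v x) = (\<Sum>i\<in>{0..<N}. d!i * ((transpose_mat U *\<^sub>v x) $ i * (transpose_mat U *\<^sub>v x) $ i))"
    and ev: "\<And>x i. x \<in> carrier_vec N \<Longrightarrow> i < N \<Longrightarrow>
        (transpose_mat U *\<^sub>v (M *\<^sub>v x)) $ i = d!i * (transpose_mat U *\<^sub>v x) $ i"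
    and inv: "\<And>y. transpose_mat U *\<^sub>v (U *\<^sub>v vec N y) = vec N y"
    by (rule spectral_coords[OF M sym], rule that, assumption+)
  define z where "z = (\<lambda>i. (transpose_mat U *\<^sub>v v) $ i)"
  define y where "y = (\<lambda>i. (transpose_mat U *\<^sub>v u) $ i)"
  have UT: "transpose_mat U \<in> carrier_mat N N" using U by simp
  have dz: "d!i * z i = \<mu> * z i" if i: "i < N" for i
  proof -
    have "d!i * z i = (transpose_mat U *\<^sub>v (M *\<^sub>v v)) $ i" unfolding z_def using ev[OF v(1) i] by simp
    also have "\<dots> = \<mu> * z i" unfolding v(3) z_def using mult_mat_vec[OF UT v(1)] i UT by simp
    finally show ?thesis .
  qed
  have "(\<Sum>i\<in>{0..<N}. z i * z i) > 0" using vv_pos[OF v(1,2)] ip[OF v(1) v(1)] unfolding z_def by simp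
  then obtain j where j: "j < N" "z j \<noteq> 0" using nz_coord by blast
  have orth: "(\<Sum>i\<in>{0..<N}. y i * z i) = 0" using ip[OF u(1) v(1)] u(2) unfolding y_def z_def by simp
  have "sort d ! 1 * (\<Sum>i\<in>{0..<N}. y i * y i) \<le> (\<Sum>i\<in>{0..<N}. d!i * (y i * y i))"
    by (rule coordL[OF U(2) N dz j _ orth]) (use mu U(3) in auto)
  then show ?thesis using ip[OF u(1) u(1)] qf[OF u(1)] U(3) unfolding second_smallest_eig_def y_def by simp
qed

lemma lemL1:
  fixes M :: "real mat"
  assumes M: "M \<in> carrier_mat N N" and sym: "transpose_mat M = M" and N: "2 \<le> N"
    and v: "v \<in> carrier_vec N"
    and hyp: "\<And>u. u \<in> carrier_vec N \<Longrightarrow> u \<bullet> v = 0 \<Longrightarrow> c * (u \<bullet> u) \<le> u \<bullet> (M *\<^sub>v u)"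
  shows "c \<le> second_smallest_eig M"
proof -
  obtain U d where U: "U \<in> carrier_mat N N" "length d = N" "asc_eigs M = sort d"
    and ip: "\<And>x x'. x \<in> carrier_vec N \<Longrightarrow> x' \<in> carrier_vec N \<Longrightarrow>
        x \<bullet> x' = (\<Sum>i\<in>{0..<N}. (transpose_mat U *\<^sub>v x) $ i * (transpose_mat U *\<^sub>v x') $ i)"
    and qf: "\<And>x. x \<in> carrier_vec N \<Longrightarrow>
        x \<bullet> (M *\<^sub>v x) = (\<Sum>i\<in>{0..<N}. d!i * ((transpose_mat U *\<^sub>v x) $ i * (transpose_mat U *\<^sub>v x) $ i))"
    and ev: "\<And>x i. x \<in> carrier_vec N \<Longrightarrow> i < N \<Longrightarrow>
        (transpose_mat U *\<^sub>v (M *\<^sub>v x)) $ i = d!i * (transpose_mat U *\<^sub>v x) $ i"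
    and inv: "\<And>y. transpose_mat U *\<^sub>v (U *\<^sub>v vec N y) = vec N y"
    by (rule spectral_coords[OF M sym], rule that, assumption+)
  define z where "z = (\<lambda>i. (transpose_mat U *\<^sub>v v) $ i)"
  have "c \<le> sort d ! 1"
  proof (rule coordL'[OF U(2) N])
    fix y :: "nat \<Rightarrow> real"
    assume orth: "(\<Sum>i\<in>{0..<N}. y i * z i) = 0"
    define u where "u = U *\<^sub>v vec N y"
    have u: "u \<in> carrier_vec N" unfolding u_def using U by simp
    have Uu: "transpose_mat U *\<^sub>v u = vec N y" unfolding u_def by (rule inv)
    have "u \<bullet> v = 0" using ip[OF u v] orth unfolding Uu z_def by simp
    then have "c * (u \<bullet> u) \<le> u \<bullet> (M *\<^sub>v u)" by (rule hyp[OF u])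
    then show "c * (\<Sum>i\<in>{0..<N}. y i * y i) \<le> (\<Sum>i\<in>{0..<N}. d!i * (y i * y i))"
      using ip[OF u u] qf[OF u] unfolding Uu by simp
  qed
  then show ?thesis using U(3) unfolding second_smallest_eig_def by simp
qed

lemma lemL2:
  fixes M :: "real mat"
  assumes M: "M \<in> carrier_mat N N" and sym: "transpose_mat M = M" and N: "2 \<le> N"
    and v: "v \<in> carrier_vec N" "v \<noteq> 0\<^sub>v N" "M *\<^sub>v v = 0\<^sub>v N"
    and w: "w \<in> carrier_vec N" "w \<noteq> 0\<^sub>v N" "w \<bullet> v = 0"
    and hw: "w \<bullet> (M *\<^sub>v w) \<le> c * (w \<bullet> w)" and c: "0 \<le> c"
  shows "second_smallest_eig M \<le> c"
proof -
  obtain U d where U: "U \<in> carrier_mat N N" "length d = N" "asc_eigs M = sort d"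
    and ip: "\<And>x x'. x \<in> carrier_vec N \<Longrightarrow> x' \<in> carrier_vec N \<Longrightarrow>
        x \<bullet> x' = (\<Sum>i\<in>{0..<N}. (transpose_mat U *\<^sub>v x) $ i * (transpose_mat U *\<^sub>v x') $ i)"
    and qf: "\<And>x. x \<in> carrier_vec N \<Longrightarrow>
        x \<bullet> (M *\<^sub>v x) = (\<Sum>i\<in>{0..<N}. d!i * ((transpose_mat U *\<^sub>v x) $ i * (transpose_mat U *\<^sub>v x) $ i))"
    and ev: "\<And>x i. x \<in> carrier_vec N \<Longrightarrow> i < N \<Longrightarrow>
        (transpose_mat U *\<^sub>v (M *\<^sub>v x)) $ i = d!i * (transpose_mat U *\<^sub>v x) $ i"
    and inv: "\<And>y. transpose_mat U *\<^sub>v (U *\<^sub>v vec N y) = vec N y"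
    by (rule spectral_coords[OF M sym], rule that, assumption+)
  define z where "z = (\<lambda>i. (transpose_mat U *\<^sub>v v) $ i)"
  define y where "y = (\<lambda>i. (transpose_mat U *\<^sub>v w) $ i)"
  have UT: "transpose_mat U \<in> carrier_mat N N" using U by simp
  have dz: "d!i * z i = 0" if i: "i < N" for i
  proof -
    have "d!i * z i = (transpose_mat U *\<^sub>v (M *\<^sub>v v)) $ i" unfolding z_def using ev[OF v(1) i] by simp
    also have "\<dots> = 0" unfolding v(3) using i UT by simp
    finally show ?thesis .
  qed
  have "(\<Sum>i\<in>{0..<N}. z i * z i) > 0" using vv_pos[OF v(1,2)] ip[OF v(1) v(1)] unfolding z_def by simp
  then obtain j where j: "j < N" "z j \<noteq> 0" using nz_coord by blast
  have "(\<Sum>i\<in>{0..<N}. y i * y i) > 0" using vv_pos[OF w(1,2)] ip[OF w(1) w(1)] unfolding y_def by simp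
  then obtain k where k: "k < N" "y k \<noteq> 0" using nz_coord by blast
  have orth: "(\<Sum>i\<in>{0..<N}. y i * z i) = 0" using ip[OF w(1) v(1)] w(3) unfolding y_def z_def by simp
  have hy: "(\<Sum>i\<in>{0..<N}. d!i * (y i * y i)) \<le> c * (\<Sum>i\<in>{0..<N}. y i * y i)"
    using hw ip[OF w(1) w(1)] qf[OF w(1)] unfolding y_def by simp
  have "sort d ! 1 \<le> c" by (rule coordL''[OF U(2) N dz j k orth hy c])
  then show ?thesis using U(3) unfolding second_smallest_eig_def by simp
qed

lemma MPSD:
  fixes M :: "real mat"
  assumes M: "M \<in> carrier_mat N N" and sym: "transpose_mat M = M" and N: "0 < N"
    and psd: "\<And>x. x \<in> carrier_vec N \<Longrightarrow> 0 \<le> x \<bullet> (M *\<^sub>v x)"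
  shows "0 \<le> asc_eigs M ! 0"
proof -
  obtain U d where U: "U \<in> carrier_mat N N" "length d = N" "asc_eigs M = sort d"
    and ip: "\<And>x x'. x \<in> carrier_vec N \<Longrightarrow> x' \<in> carrier_vec N \<Longrightarrow>
        x \<bullet> x' = (\<Sum>i\<in>{0..<N}. (transpose_mat U *\<^sub>v x) $ i * (transpose_mat U *\<^sub>v x') $ i)"
    and qf: "\<And>x. x \<in> carrier_vec N \<Longrightarrow>
        x \<bullet> (M *\<^sub>v x) = (\<Sum>i\<in>{0..<N}. d!i * ((transpose_mat U *\<^sub>v x) $ i * (transpose_mat U *\<^sub>v x) $ i))"
    and ev: "\<And>x i. x \<in> carrier_vec N \<Longrightarrow> i < N \<Longrightarrow>
        (transpose_mat U *\<^sub>v (M *\<^sub>v x)) $ i = d!i * (transpose_mat U *\<^sub>v x) $ i"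
    and inv: "\<And>y. transpose_mat U *\<^sub>v (U *\<^sub>v vec N y) = vec N y"
    by (rule spectral_coords[OF M sym], rule that, assumption+)
  have "sort d ! 0 \<in> set (sort d)" by (rule nth_mem) (simp add: U(2) N)
  then have "sort d ! 0 \<in> set d" by simp
  then obtain i where i: "i < length d" "d!i = sort d ! 0" by (auto simp: in_set_conv_nth)
  then have i: "i < N" "d!i = sort d ! 0" using U(2) by auto
  define x where "x = U *\<^sub>v vec N (\<lambda>l. if l = i then 1 else 0)"
  have x: "x \<in> carrier_vec N" unfolding x_def using U by simp
  have "x \<bullet> (M *\<^sub>v x) = (\<Sum>l\<in>{0..<N}. if l = i then d!i else 0)"
  proof -
    have "x \<bullet> (M *\<^sub>v x) = (\<Sum>l\<in>{0..<N}. d!l * ((vec N (\<lambda>l. if l = i then 1 else 0)) $ l * (vec N (\<lambda>l. if l = i then 1 else 0)) $ l))"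
      using qf[OF x] unfolding x_def inv .
    also have "\<dots> = (\<Sum>l\<in>{0..<N}. if l = i then d!i else 0)"
      by (intro sum.cong refl) auto
    finally show ?thesis .
  qed
  also have "\<dots> = d!i" using i by (simp only: sum.delta finite_atLeastLessThan) simp
  finally show ?thesis using psd[OF x] i U(3) by simp
qed


definition ee :: "(nat \<Rightarrow> nat \<Rightarrow> bool) \<Rightarrow> nat \<Rightarrow> nat \<Rightarrow> real" where
  "ee E i j = (if E i j then 1 else 0)"

lemma lap_entry:
  assumes g: "simple_graph n E" and i: "i < n" and j: "j < n"
  shows "laplacian n E $$ (i,j) = (if i = j then (\<Sum>l\<in>{0..<n}. ee E i l) else 0) - ee E i j"
proof -
  have card: "real (card {l. l < n \<and> E i l}) = (\<Sum>l\<in>{0..<n}. ee E i l)"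
  proof -
    have "{l. l < n \<and> E i l} = {l\<in>{0..<n}. E i l}" by auto
    then have "real (card {l. l < n \<and> E i l}) = (\<Sum>l\<in>{l\<in>{0..<n}. E i l}. (1::real))" by simp
    also have "\<dots> = (\<Sum>l\<in>{0..<n}. ee E i l)"
      unfolding ee_def by (rule sum.inter_filter) simp
    finally show ?thesis .
  qed
  have "\<not> E i i" using g i unfolding simple_graph_def by auto
  then show ?thesis using i j card unfolding laplacian_def ee_def by auto
qed

lemma ee_sym: "simple_graph n E \<Longrightarrow> i < n \<Longrightarrow> j < n \<Longrightarrow> ee E i j = ee E j i"
  unfolding simple_graph_def ee_def by auto

lemma lap_carrier: "laplacian n E \<in> carrier_mat n n"
  unfolding laplacian_def by simp

lemma lap_sym: assumes "simple_graph n E" shows "transpose_mat (laplacian n E) = laplacian n E"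
  by (rule eq_matI) (use assms in \<open>auto simp: lap_entry lap_carrier[THEN carrier_matD(1)] lap_carrier[THEN carrier_matD(2)] ee_sym\<close>)

lemma lap_mult:
  assumes g: "simple_graph n E" and x: "x \<in> carrier_vec n" and i: "i < n"
  shows "(laplacian n E *\<^sub>v x) $ i = (\<Sum>j\<in>{0..<n}. ee E i j * (x $ i - x $ j))"
proof -
  have "(laplacian n E *\<^sub>v x) $ i = (\<Sum>j\<in>{0..<n}. laplacian n E $$ (i,j) * x $ j)"
    using x i lap_carrier[of n E] by (auto simp: scalar_prod_def)
  also have "\<dots> = (\<Sum>j\<in>{0..<n}. (if i = j then (\<Sum>l\<in>{0..<n}. ee E i l) else 0) * x $ j - ee E i j * x $ j)"
    using g i by (intro sum.cong refl) (auto simp: lap_entry algebra_simps)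
  also have "\<dots> = (\<Sum>l\<in>{0..<n}. ee E i l) * x $ i - (\<Sum>j\<in>{0..<n}. ee E i j * x $ j)"
  proof -
    have "(\<Sum>j\<in>{0..<n}. (if i = j then (\<Sum>l\<in>{0..<n}. ee E i l) else 0) * x $ j)
        = (\<Sum>j\<in>{0..<n}. if j = i then (\<Sum>l\<in>{0..<n}. ee E i l) * x $ i else 0)"
      by (intro sum.cong) auto
    also have "\<dots> = (\<Sum>l\<in>{0..<n}. ee E i l) * x $ i" using i by (simp only: sum.delta finite_atLeastLessThan) simp
    finally show ?thesis by (simp add: sum_subtractf)
  qed
  also have "\<dots> = (\<Sum>j\<in>{0..<n}. ee E i j * x $ i) - (\<Sum>j\<in>{0..<n}. ee E i j * x $ j)"
    by (simp add: sum_distrib_right)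
  also have "\<dots> = (\<Sum>j\<in>{0..<n}. ee E i j * (x $ i - x $ j))"
    by (simp add: sum_subtractf right_diff_distrib)
  finally show ?thesis .
qed

lemma lap_ones:
  assumes g: "simple_graph n E"
  shows "laplacian n E *\<^sub>v vec n (\<lambda>_. 1) = 0\<^sub>v n"
proof (rule eq_vecI)
  fix i assume "i < dim_vec (0\<^sub>v n :: real vec)"
  then have i: "i < n" by simp
  show "(laplacian n E *\<^sub>v vec n (\<lambda>_. 1)) $ i = 0\<^sub>v n $ i"
    using lap_mult[OF g _ i, of "vec n (\<lambda>_. 1)"] i by simp
qed (use lap_carrier[of n E] in simp)

lemma lap_qf:
  assumes g: "simple_graph n E" and x: "x \<in> carrier_vec n"
  shows "x \<bullet> (laplacian n E *\<^sub>v x) = (\<Sum>i\<in>{0..<n}. \<Sum>j\<in>{0..<n}. ee E i j * (x $ i - x $ j)^2) / 2"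
proof -
  have "x \<bullet> (laplacian n E *\<^sub>v x) = (\<Sum>i\<in>{0..<n}. x $ i * (\<Sum>j\<in>{0..<n}. ee E i j * (x $ i - x $ j)))"
  proof -
    have "x \<bullet> (laplacian n E *\<^sub>v x) = (\<Sum>i\<in>{0..<n}. x $ i * (laplacian n E *\<^sub>v x) $ i)"
      using lap_carrier[of n E] by (simp add: scalar_prod_def)
    also have "\<dots> = (\<Sum>i\<in>{0..<n}. x $ i * (\<Sum>j\<in>{0..<n}. ee E i j * (x $ i - x $ j)))"
      by (intro sum.cong refl) (simp add: lap_mult[OF g x])
    finally show ?thesis .
  qed
  also have "\<dots> = (\<Sum>i\<in>{0..<n}. \<Sum>j\<in>{0..<n}. ee E i j * (x $ i * x $ i - x $ i * x $ j))"
    by (simp add: sum_distrib_left algebra_simps)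
  finally have 1: "x \<bullet> (laplacian n E *\<^sub>v x) = (\<Sum>i\<in>{0..<n}. \<Sum>j\<in>{0..<n}. ee E i j * (x $ i * x $ i - x $ i * x $ j))" .
  have "(\<Sum>i\<in>{0..<n}. \<Sum>j\<in>{0..<n}. ee E i j * (x $ i * x $ i - x $ i * x $ j))
      = (\<Sum>j\<in>{0..<n}. \<Sum>i\<in>{0..<n}. ee E i j * (x $ i * x $ i - x $ i * x $ j))"
    by (rule sum.swap)
  also have "\<dots> = (\<Sum>i\<in>{0..<n}. \<Sum>j\<in>{0..<n}. ee E i j * (x $ j * x $ j - x $ j * x $ i))"
    using g by (intro sum.cong refl) (auto simp: ee_sym[of n E])
  finally have 2: "(\<Sum>i\<in>{0..<n}. \<Sum>j\<in>{0..<n}. ee E i j * (x $ i * x $ i - x $ i * x $ j))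
      = (\<Sum>i\<in>{0..<n}. \<Sum>j\<in>{0..<n}. ee E i j * (x $ j * x $ j - x $ j * x $ i))" .
  have "(\<Sum>i\<in>{0..<n}. \<Sum>j\<in>{0..<n}. ee E i j * (x $ i - x $ j)^2)
     = (\<Sum>i\<in>{0..<n}. \<Sum>j\<in>{0..<n}. ee E i j * (x $ i * x $ i - x $ i * x $ j))
     + (\<Sum>i\<in>{0..<n}. \<Sum>j\<in>{0..<n}. ee E i j * (x $ j * x $ j - x $ j * x $ i))"
    by (simp add: sum.distrib[symmetric] power2_eq_square algebra_simps)
  then show ?thesis using 1 2 by simp
qed

lemma lap_psd:
  assumes g: "simple_graph n E" and x: "x \<in> carrier_vec n"
  shows "0 \<le> x \<bullet> (laplacian n E *\<^sub>v x)"
  unfolding lap_qf[OF g x]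
  by (intro divide_nonneg_pos sum_nonneg mult_nonneg_nonneg) (auto simp: ee_def)


lemma split_sum:
  fixes f :: "nat \<Rightarrow> real"
  shows "(\<Sum>i\<in>{0..<n+n}. f i) = (\<Sum>i\<in>{0..<n}. f i) + (\<Sum>i\<in>{0..<n}. f (n+i))"
proof -
  have "(\<Sum>i\<in>{0..<n+n}. f i) = (\<Sum>i\<in>{0..<n}. f i) + (\<Sum>i\<in>{n..<n+n}. f i)"
    by (rule sum.atLeastLessThan_concat[symmetric]) auto
  also have "(\<Sum>i\<in>{n..<n+n}. f i) = (\<Sum>i\<in>{0..<n}. f (n+i))"
    using sum.shift_bounds_nat_ivl[of f 0 n n] by (simp add: add.commute)
  finally show ?thesis .
qed

lemma bil:
  fixes A :: "real mat"
  assumes "A \<in> carrier_mat n m" "a \<in> carrier_vec n" "b \<in> carrier_vec m"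
  shows "a \<bullet> (A *\<^sub>v b) = (\<Sum>i\<in>{0..<n}. \<Sum>j\<in>{0..<m}. a$i * A$$(i,j) * b$j)"
  using assms by (auto simp: scalar_prod_def sum_distrib_left mult.assoc intro!: sum.cong)

lemma delta_sum: "(i::nat) < n \<Longrightarrow> (\<Sum>j\<in>{0..<n}. (if i = j then c else 0) * f j) = c * (f i :: real)"
proof -
  assume i: "i < n"
  have "(\<Sum>j\<in>{0..<n}. (if i = j then c else 0) * f j) = (\<Sum>j\<in>{0..<n}. if j = i then c * f i else 0)"
    by (intro sum.cong) auto
  then show ?thesis using i by (simp only: sum.delta finite_atLeastLessThan) simp
qed

context
  fixes n k :: nat and Q1 Q2 B :: "real mat" and p :: real
  assumes Q1: "Q1 \<in> carrier_mat n n" and Q2: "Q2 \<in> carrier_mat n n" and B: "B \<in> carrier_mat n n"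
begin

lemma supra_carrier: "supra_laplacian k Q1 Q2 B p \<in> carrier_mat (n+n) (n+n)"
  unfolding supra_laplacian_def using Q1 Q2 B by simp

lemma supra_entries:
  assumes i: "i < n" and j: "j < n"
  shows "supra_laplacian k Q1 Q2 B p $$ (i,j) = Q1 $$ (i,j) + (if i = j then real k * p else 0)"
    "supra_laplacian k Q1 Q2 B p $$ (i,n+j) = - p * B $$ (i,j)"
    "supra_laplacian k Q1 Q2 B p $$ (n+i,j) = - p * B $$ (j,i)"
    "supra_laplacian k Q1 Q2 B p $$ (n+i,n+j) = Q2 $$ (i,j) + (if i = j then real k * p else 0)"
  unfolding supra_laplacian_def using Q1 Q2 B i j by auto

lemma supra_sym:
  assumes "transpose_mat Q1 = Q1" "transpose_mat Q2 = Q2"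
  shows "transpose_mat (supra_laplacian k Q1 Q2 B p) = supra_laplacian k Q1 Q2 B p"
proof -
  have s1: "\<And>i j. i < n \<Longrightarrow> j < n \<Longrightarrow> Q1 $$ (i,j) = Q1 $$ (j,i)"
    using assms(1) Q1 by (metis carrier_matD index_transpose_mat(1))
  have s2: "\<And>i j. i < n \<Longrightarrow> j < n \<Longrightarrow> Q2 $$ (i,j) = Q2 $$ (j,i)"
    using assms(2) Q2 by (metis carrier_matD index_transpose_mat(1))
  show ?thesis
    unfolding supra_laplacian_def using Q1 Q2 B
    by (intro eq_matI) (auto simp: s1 s2)
qed

lemma supra_qf:
  assumes x: "x \<in> carrier_vec (n+n)"
  defines "a \<equiv> vec n (\<lambda>i. x $ i)" and "b \<equiv> vec n (\<lambda>i. x $ (n+i))"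
  shows "x \<bullet> (supra_laplacian k Q1 Q2 B p *\<^sub>v x) = a \<bullet> (Q1 *\<^sub>v a) + b \<bullet> (Q2 *\<^sub>v b)
     + p * (real k * (a \<bullet> a) + real k * (b \<bullet> b) - 2 * (a \<bullet> (B *\<^sub>v b)))"
proof -
  let ?S = "supra_laplacian k Q1 Q2 B p"
  have a: "a \<in> carrier_vec n" and b: "b \<in> carrier_vec n" unfolding a_def b_def by auto
  have "x \<bullet> (?S *\<^sub>v x) = (\<Sum>i\<in>{0..<n+n}. \<Sum>j\<in>{0..<n+n}. x$i * ?S$$(i,j) * x$j)"
    by (rule bil[OF supra_carrier x x])
  also have "\<dots> = (\<Sum>i\<in>{0..<n}. \<Sum>j\<in>{0..<n}. x$i * ?S$$(i,j) * x$j)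
      + (\<Sum>i\<in>{0..<n}. \<Sum>j\<in>{0..<n}. x$i * ?S$$(i,n+j) * x$(n+j))
      + (\<Sum>i\<in>{0..<n}. \<Sum>j\<in>{0..<n}. x$(n+i) * ?S$$(n+i,j) * x$j)
      + (\<Sum>i\<in>{0..<n}. \<Sum>j\<in>{0..<n}. x$(n+i) * ?S$$(n+i,n+j) * x$(n+j))"
    by (simp add: split_sum sum.distrib)
  also have "(\<Sum>i\<in>{0..<n}. \<Sum>j\<in>{0..<n}. x$i * ?S$$(i,j) * x$j)
      = a \<bullet> (Q1 *\<^sub>v a) + real k * p * (a \<bullet> a)"
  proof -
    have "(\<Sum>i\<in>{0..<n}. \<Sum>j\<in>{0..<n}. x$i * ?S$$(i,j) * x$j)
       = (\<Sum>i\<in>{0..<n}. (\<Sum>j\<in>{0..<n}. a$i * Q1$$(i,j) * a$j) + real k * p * (a$i * a$i))"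
    proof (intro sum.cong refl)
      fix i assume "i \<in> {0..<n}"
      then have i: "i < n" by simp
      have "(\<Sum>j\<in>{0..<n}. x$i * ?S$$(i,j) * x$j)
          = (\<Sum>j\<in>{0..<n}. a$i * Q1$$(i,j) * a$j + (if i = j then real k * p else 0) * (a$i * a$j))"
        using i unfolding a_def by (intro sum.cong refl) (auto simp: supra_entries algebra_simps)
      also have "\<dots> = (\<Sum>j\<in>{0..<n}. a$i * Q1$$(i,j) * a$j) + real k * p * (a$i * a$i)"
        using i by (simp add: sum.distrib delta_sum)
      finally show "(\<Sum>j\<in>{0..<n}. x$i * ?S$$(i,j) * x$j) = (\<Sum>j\<in>{0..<n}. a$i * Q1$$(i,j) * a$j) + real k * p * (a$i * a$i)" .
    qed
    also have "\<dots> = a \<bullet> (Q1 *\<^sub>v a) + real k * p * (a \<bullet> a)"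
      using bil[OF Q1 a a] a by (simp add: sum.distrib sum_distrib_left scalar_prod_def)
    finally show ?thesis .
  qed
  also have "(\<Sum>i\<in>{0..<n}. \<Sum>j\<in>{0..<n}. x$(n+i) * ?S$$(n+i,n+j) * x$(n+j))
      = b \<bullet> (Q2 *\<^sub>v b) + real k * p * (b \<bullet> b)"
  proof -
    have "(\<Sum>i\<in>{0..<n}. \<Sum>j\<in>{0..<n}. x$(n+i) * ?S$$(n+i,n+j) * x$(n+j))
       = (\<Sum>i\<in>{0..<n}. (\<Sum>j\<in>{0..<n}. b$i * Q2$$(i,j) * b$j) + real k * p * (b$i * b$i))"
    proof (intro sum.cong refl)
      fix i assume "i \<in> {0..<n}"
      then have i: "i < n" by simp
      have "(\<Sum>j\<in>{0..<n}. x$(n+i) * ?S$$(n+i,n+j) * x$(n+j))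
          = (\<Sum>j\<in>{0..<n}. b$i * Q2$$(i,j) * b$j + (if i = j then real k * p else 0) * (b$i * b$j))"
        using i unfolding b_def by (intro sum.cong refl) (auto simp: supra_entries(4); simp add: algebra_simps)
      also have "\<dots> = (\<Sum>j\<in>{0..<n}. b$i * Q2$$(i,j) * b$j) + real k * p * (b$i * b$i)"
        using i by (simp add: sum.distrib delta_sum)
      finally show "(\<Sum>j\<in>{0..<n}. x$(n+i) * ?S$$(n+i,n+j) * x$(n+j)) = (\<Sum>j\<in>{0..<n}. b$i * Q2$$(i,j) * b$j) + real k * p * (b$i * b$i)" .
    qed
    also have "\<dots> = b \<bullet> (Q2 *\<^sub>v b) + real k * p * (b \<bullet> b)"
      using bil[OF Q2 b b] b by (simp add: sum.distrib sum_distrib_left scalar_prod_def)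
    finally show ?thesis .
  qed
  also have "(\<Sum>i\<in>{0..<n}. \<Sum>j\<in>{0..<n}. x$i * ?S$$(i,n+j) * x$(n+j)) = - p * (a \<bullet> (B *\<^sub>v b))"
  proof -
    have "(\<Sum>i\<in>{0..<n}. \<Sum>j\<in>{0..<n}. x$i * ?S$$(i,n+j) * x$(n+j))
        = (\<Sum>i\<in>{0..<n}. \<Sum>j\<in>{0..<n}. - p * (a$i * B$$(i,j) * b$j))"
      unfolding a_def b_def by (intro sum.cong refl) (auto simp: supra_entries)
    then show ?thesis using bil[OF B a b] by (simp add: sum_negf sum_distrib_left)
  qed
  also have "(\<Sum>i\<in>{0..<n}. \<Sum>j\<in>{0..<n}. x$(n+i) * ?S$$(n+i,j) * x$j) = - p * (a \<bullet> (B *\<^sub>v b))"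
  proof -
    have "(\<Sum>i\<in>{0..<n}. \<Sum>j\<in>{0..<n}. x$(n+i) * ?S$$(n+i,j) * x$j)
        = (\<Sum>i\<in>{0..<n}. \<Sum>j\<in>{0..<n}. - p * (a$j * B$$(j,i) * b$i))"
      unfolding a_def b_def by (intro sum.cong refl) (auto simp: supra_entries)
    also have "\<dots> = (\<Sum>j\<in>{0..<n}. \<Sum>i\<in>{0..<n}. - p * (a$j * B$$(j,i) * b$i))"
      by (rule sum.swap)
    finally show ?thesis using bil[OF B a b] by (simp add: sum_negf sum_distrib_left)
  qed
  finally show ?thesis by (simp add: algebra_simps)
qed

end


lemma sq_shift:
  fixes f :: "nat \<Rightarrow> real"
  shows "(\<Sum>i\<in>{0..<n}. (f i - c) * (f i - c)) = (\<Sum>i\<in>{0..<n}. f i * f i) - 2 * c * (\<Sum>i\<in>{0..<n}. f i) + real n * (c * c)"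
proof -
  have "(\<Sum>i\<in>{0..<n}. (f i - c) * (f i - c)) = (\<Sum>i\<in>{0..<n}. f i * f i - 2 * c * f i + c * c)"
    by (intro sum.cong refl) (simp add: algebra_simps)
  also have "\<dots> = (\<Sum>i\<in>{0..<n}. f i * f i) - 2 * c * (\<Sum>i\<in>{0..<n}. f i) + real n * (c * c)"
    by (simp add: sum.distrib sum_subtractf sum_distrib_left)
  finally show ?thesis .
qed

lemma var_id:
  fixes f :: "nat \<Rightarrow> real"
  assumes "0 < n"
  shows "(\<Sum>i\<in>{0..<n}. (f i - (\<Sum>i\<in>{0..<n}. f i) / real n) * (f i - (\<Sum>i\<in>{0..<n}. f i) / real n))
     = (\<Sum>i\<in>{0..<n}. f i * f i) - (\<Sum>i\<in>{0..<n}. f i)^2 / real n"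
  unfolding sq_shift using assms by (simp add: field_simps power2_eq_square)

lemma var_nonneg:
  fixes f :: "nat \<Rightarrow> real"
  assumes "0 < n"
  shows "(\<Sum>i\<in>{0..<n}. f i)^2 / real n \<le> (\<Sum>i\<in>{0..<n}. f i * f i)"
proof -
  have "0 \<le> (\<Sum>i\<in>{0..<n}. (f i - (\<Sum>i\<in>{0..<n}. f i) / real n) * (f i - (\<Sum>i\<in>{0..<n}. f i) / real n))"
    by (intro sum_nonneg) simp
  then show ?thesis unfolding var_id[OF assms] by simp
qed

lemma lap_bound:
  assumes g: "simple_graph n E" and n2: "2 \<le> n" and a: "a \<in> carrier_vec n"
    and m: "m \<le> second_smallest_eig (laplacian n E)"
  shows "m * (a \<bullet> a - (\<Sum>i\<in>{0..<n}. a$i)^2 / real n) \<le> a \<bullet> (laplacian n E *\<^sub>v a)"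
proof -
  let ?L = "laplacian n E"
  let ?o = "vec n (\<lambda>_. 1::real)"
  define s where "s = (\<Sum>i\<in>{0..<n}. a$i)"
  define u where "u = vec n (\<lambda>i. a$i - s / real n)"
  have L: "?L \<in> carrier_mat n n" by (rule lap_carrier)
  have symL: "transpose_mat ?L = ?L" by (rule lap_sym[OF g])
  have o: "?o \<in> carrier_vec n" by simp
  have o0: "?o \<noteq> 0\<^sub>v n"
  proof
    assume "?o = 0\<^sub>v n"
    then have "?o $ 0 = (0\<^sub>v n :: real vec) $ 0" by simp
    then show False using n2 by simp
  qed
  have Lo: "?L *\<^sub>v ?o = 0 \<cdot>\<^sub>v ?o" using lap_ones[OF g] by auto
  have mu: "0 \<le> asc_eigs ?L ! 0"
    by (rule MPSD[OF L symL]) (use n2 lap_psd[OF g] in auto)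
  have u: "u \<in> carrier_vec n" unfolding u_def by simp
  have uo: "u \<bullet> ?o = 0"
  proof -
    have "u \<bullet> ?o = (\<Sum>i\<in>{0..<n}. a$i - s / real n)" unfolding u_def by (simp add: scalar_prod_def)
    also have "\<dots> = 0" unfolding s_def using n2 by (simp add: sum_subtractf)
    finally show ?thesis .
  qed
  have "second_smallest_eig ?L * (u \<bullet> u) \<le> u \<bullet> (?L *\<^sub>v u)"
    by (rule lemL0[OF L symL n2 o o0 Lo mu u uo])
  moreover have "u \<bullet> (?L *\<^sub>v u) = a \<bullet> (?L *\<^sub>v a)"
    unfolding lap_qf[OF g u] lap_qf[OF g a] unfolding u_def by simp
  moreover have uu: "u \<bullet> u = a \<bullet> a - s^2 / real n"
  proof -
    have "u \<bullet> u = (\<Sum>i\<in>{0..<n}. (a$i - s / real n) * (a$i - s / real n))"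
      unfolding u_def by (simp add: scalar_prod_def)
    also have "\<dots> = (\<Sum>i\<in>{0..<n}. a$i * a$i) - s^2 / real n"
      using var_id[of n "\<lambda>i. a$i"] n2 unfolding s_def by simp
    also have "(\<Sum>i\<in>{0..<n}. a$i * a$i) = a \<bullet> a" using a by (simp add: scalar_prod_def)
    finally show ?thesis .
  qed
  moreover have "0 \<le> u \<bullet> u"
    unfolding u_def by (simp add: scalar_prod_def sum_nonneg)
  ultimately show ?thesis using m unfolding s_def[symmetric]
    by (metis (no_types, lifting) mult_right_mono order_trans)
qed

lemma B_props:
  assumes "k_regular_01 n k B"
  shows "B \<in> carrier_mat n n"
    "\<And>i j. i < n \<Longrightarrow> j < n \<Longrightarrow> 0 \<le> B $$ (i,j)"
    "\<And>i. i < n \<Longrightarrow> (\<Sum>j\<in>{0..<n}. B $$ (i,j)) = real k"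
    "\<And>j. j < n \<Longrightarrow> (\<Sum>i\<in>{0..<n}. B $$ (i,j)) = real k"
proof -
  have Bc: "B \<in> carrier_mat n n"
    and B01: "\<And>i j. i < n \<Longrightarrow> j < n \<Longrightarrow> B $$ (i,j) = 0 \<or> B $$ (i,j) = 1"
    and rows: "\<And>i. i < n \<Longrightarrow> card {j. j < n \<and> B $$ (i,j) = 1} = k"
    and cols: "\<And>j. j < n \<Longrightarrow> card {i. i < n \<and> B $$ (i,j) = 1} = k"
    using assms unfolding k_regular_01_def by blast+
  have ind: "B $$ (i,j) = (if B $$ (i,j) = 1 then 1 else 0)" if "i < n" "j < n" for i j
    using B01[OF that] by auto
  show "B \<in> carrier_mat n n" by (rule Bc)
  show "0 \<le> B $$ (i,j)" if "i < n" "j < n" for i j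
    using B01[OF that] by auto
  show "(\<Sum>j\<in>{0..<n}. B $$ (i,j)) = real k" if i: "i < n" for i
  proof -
    have "(\<Sum>j\<in>{0..<n}. B $$ (i,j)) = (\<Sum>j\<in>{0..<n}. if B $$ (i,j) = 1 then 1 else 0)"
      by (intro sum.cong refl) (use ind i in simp)
    also have "\<dots> = (\<Sum>j\<in>{j\<in>{0..<n}. B $$ (i,j) = 1}. 1)"
      by (rule sum.inter_filter[symmetric]) simp
    also have "{j\<in>{0..<n}. B $$ (i,j) = 1} = {j. j < n \<and> B $$ (i,j) = 1}" by auto
    finally show ?thesis using rows[OF i] by simp
  qed
  show "(\<Sum>i\<in>{0..<n}. B $$ (i,j)) = real k" if j: "j < n" for j
  proof -
    have "(\<Sum>i\<in>{0..<n}. B $$ (i,j)) = (\<Sum>i\<in>{0..<n}. if B $$ (i,j) = 1 then 1 else 0)"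
      by (intro sum.cong refl) (use ind j in simp)
    also have "\<dots> = (\<Sum>i\<in>{i\<in>{0..<n}. B $$ (i,j) = 1}. 1)"
      by (rule sum.inter_filter[symmetric]) simp
    also have "{i\<in>{0..<n}. B $$ (i,j) = 1} = {i. i < n \<and> B $$ (i,j) = 1}" by auto
    finally show ?thesis using cols[OF j] by simp
  qed
qed

lemma F3:
  assumes Bk: "k_regular_01 n k B" and a: "a \<in> carrier_vec n" and b: "b \<in> carrier_vec n"
  shows "2 * c * real k * ((\<Sum>i\<in>{0..<n}. a$i) - (\<Sum>i\<in>{0..<n}. b$i)) - c * c * real n * real k
     \<le> real k * (a \<bullet> a) + real k * (b \<bullet> b) - 2 * (a \<bullet> (B *\<^sub>v b))"
proof -
  note Bp = B_props[OF Bk]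
  let ?B = "\<lambda>i j. B $$ (i,j)"
  define T1 where "T1 = (\<Sum>i\<in>{0..<n}. \<Sum>j\<in>{0..<n}. (a$i * a$i) * ?B i j)"
  define T2 where "T2 = (\<Sum>i\<in>{0..<n}. \<Sum>j\<in>{0..<n}. (b$j * b$j) * ?B i j)"
  define T3 where "T3 = (\<Sum>i\<in>{0..<n}. \<Sum>j\<in>{0..<n}. ?B i j)"
  define T4 where "T4 = (\<Sum>i\<in>{0..<n}. \<Sum>j\<in>{0..<n}. a$i * ?B i j * b$j)"
  define T5 where "T5 = (\<Sum>i\<in>{0..<n}. \<Sum>j\<in>{0..<n}. a$i * ?B i j)"
  define T6 where "T6 = (\<Sum>i\<in>{0..<n}. \<Sum>j\<in>{0..<n}. b$j * ?B i j)"
  have "0 \<le> (\<Sum>i\<in>{0..<n}. \<Sum>j\<in>{0..<n}. ?B i j * ((a$i - b$j - c) * (a$i - b$j - c)))"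
    by (intro sum_nonneg, rule mult_nonneg_nonneg) (auto simp: Bp(2))
  also have "\<dots> = (\<Sum>i\<in>{0..<n}. \<Sum>j\<in>{0..<n}. (((((a$i * a$i) * ?B i j + (b$j * b$j) * ?B i j) + (c * c) * ?B i j)
      - 2 * (a$i * ?B i j * b$j)) - (2 * c) * (a$i * ?B i j)) + (2 * c) * (b$j * ?B i j))"
    by (intro sum.cong refl) (simp add: algebra_simps)
  also have "\<dots> = T1 + T2 + (c * c) * T3 - 2 * T4 - (2 * c) * T5 + (2 * c) * T6"
    unfolding T1_def T2_def T3_def T4_def T5_def T6_def
    by (simp only: sum.distrib sum_subtractf sum_distrib_left)
  finally have main: "0 \<le> T1 + T2 + (c * c) * T3 - 2 * T4 - (2 * c) * T5 + (2 * c) * T6" .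
  have T1: "T1 = real k * (a \<bullet> a)"
  proof -
    have "T1 = (\<Sum>i\<in>{0..<n}. (a$i * a$i) * (\<Sum>j\<in>{0..<n}. ?B i j))"
      unfolding T1_def by (simp add: sum_distrib_left)
    also have "\<dots> = (\<Sum>i\<in>{0..<n}. real k * (a$i * a$i))" using Bp(3) by (intro sum.cong) auto
    finally show ?thesis using a by (simp add: scalar_prod_def sum_distrib_left)
  qed
  have T2: "T2 = real k * (b \<bullet> b)"
  proof -
    have "T2 = (\<Sum>j\<in>{0..<n}. \<Sum>i\<in>{0..<n}. (b$j * b$j) * ?B i j)"
      unfolding T2_def by (rule sum.swap)
    also have "\<dots> = (\<Sum>j\<in>{0..<n}. (b$j * b$j) * (\<Sum>i\<in>{0..<n}. ?B i j))"
      by (simp add: sum_distrib_left)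
    also have "\<dots> = (\<Sum>j\<in>{0..<n}. real k * (b$j * b$j))" using Bp(4) by (intro sum.cong) auto
    finally show ?thesis using b by (simp add: scalar_prod_def sum_distrib_left)
  qed
  have T3: "T3 = real n * real k"
  proof -
    have "T3 = (\<Sum>i\<in>{0..<n}. real k)" unfolding T3_def using Bp(3) by (intro sum.cong) auto
    then show ?thesis by simp
  qed
  have T4: "T4 = a \<bullet> (B *\<^sub>v b)" unfolding T4_def using bil[OF Bp(1) a b] by simp
  have T5: "T5 = real k * (\<Sum>i\<in>{0..<n}. a$i)"
  proof -
    have "T5 = (\<Sum>i\<in>{0..<n}. a$i * (\<Sum>j\<in>{0..<n}. ?B i j))"
      unfolding T5_def by (simp add: sum_distrib_left)
    also have "\<dots> = (\<Sum>i\<in>{0..<n}. real k * a$i)" using Bp(3) by (intro sum.cong) auto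
    finally show ?thesis by (simp add: sum_distrib_left)
  qed
  have T6: "T6 = real k * (\<Sum>j\<in>{0..<n}. b$j)"
  proof -
    have "T6 = (\<Sum>j\<in>{0..<n}. \<Sum>i\<in>{0..<n}. b$j * ?B i j)"
      unfolding T6_def by (rule sum.swap)
    also have "\<dots> = (\<Sum>j\<in>{0..<n}. b$j * (\<Sum>i\<in>{0..<n}. ?B i j))"
      by (simp add: sum_distrib_left)
    also have "\<dots> = (\<Sum>j\<in>{0..<n}. real k * b$j)" using Bp(4) by (intro sum.cong) auto
    finally show ?thesis by (simp add: sum_distrib_left)
  qed
  show ?thesis using main unfolding T1 T2 T3 T4 T5 T6 by (simp add: algebra_simps)
qed


lemma max4: "(x::real) \<le> max 0 (x / 4) * 4" by (simp add: max_def)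

lemma lap_rowsum:
  assumes g: "simple_graph n E" and i: "i < n"
  shows "(\<Sum>j\<in>{0..<n}. laplacian n E $$ (i,j)) = 0"
proof -
  have "(laplacian n E *\<^sub>v vec n (\<lambda>_. 1)) $ i = (\<Sum>j\<in>{0..<n}. laplacian n E $$ (i,j))"
    using i lap_carrier[of n E] by (simp add: scalar_prod_def)
  then show ?thesis using lap_ones[OF g] i by simp
qed

context
  fixes n k :: nat and E1 E2 :: "nat \<Rightarrow> nat \<Rightarrow> bool" and B :: "real mat"
  assumes n2: "2 \<le> n" and g1: "simple_graph n E1" and g2: "simple_graph n E2"
    and k1: "1 \<le> k" and Bk: "k_regular_01 n k B"
begin

lemma Bc: "B \<in> carrier_mat n n" using B_props[OF Bk] by simp
lemma Q1c: "laplacian n E1 \<in> carrier_mat n n" by (rule lap_carrier)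
lemma Q2c: "laplacian n E2 \<in> carrier_mat n n" by (rule lap_carrier)

lemma supra_ones:
  "supra_laplacian k (laplacian n E1) (laplacian n E2) B p *\<^sub>v vec (n+n) (\<lambda>_. 1) = 0\<^sub>v (n+n)"
proof (rule eq_vecI)
  let ?S = "supra_laplacian k (laplacian n E1) (laplacian n E2) B p"
  note Sc = supra_carrier[OF Q1c Q2c Bc, of k p]
  note ent = supra_entries[OF Q1c Q2c Bc]
  fix i assume "i < dim_vec (0\<^sub>v (n+n) :: real vec)"
  then have i: "i < n + n" by simp
  have "(?S *\<^sub>v vec (n+n) (\<lambda>_. 1)) $ i = (\<Sum>j\<in>{0..<n+n}. ?S $$ (i,j))"
    using i Sc by (simp add: scalar_prod_def)
  also have "\<dots> = (\<Sum>j\<in>{0..<n}. ?S $$ (i,j)) + (\<Sum>j\<in>{0..<n}. ?S $$ (i,n+j))"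
    by (rule split_sum)
  also have "\<dots> = 0"
  proof (cases "i < n")
    case True
    have "(\<Sum>j\<in>{0..<n}. ?S $$ (i,j)) = (\<Sum>j\<in>{0..<n}. laplacian n E1 $$ (i,j)) + (\<Sum>j\<in>{0..<n}. (if i = j then real k * p else 0))"
      using True by (simp add: ent sum.distrib)
    also have "\<dots> = real k * p" using True lap_rowsum[OF g1 True] by simp
    finally have 1: "(\<Sum>j\<in>{0..<n}. ?S $$ (i,j)) = real k * p" .
    have "(\<Sum>j\<in>{0..<n}. ?S $$ (i,n+j)) = (\<Sum>j\<in>{0..<n}. - p * B $$ (i,j))"
      using True by (intro sum.cong refl) (simp add: ent)
    also have "\<dots> = - p * real k" using B_props(3)[OF Bk True] sum_distrib_left[of "-p" "\<lambda>j. B $$ (i,j)" "{0..<n}"] by simp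
    finally show ?thesis using 1 by simp
  next
    case False
    then obtain i' where i': "i = n + i'" "i' < n" using i by (metis add_less_cancel_left le_Suc_ex not_less)
    have "(\<Sum>j\<in>{0..<n}. ?S $$ (i,n+j)) = (\<Sum>j\<in>{0..<n}. laplacian n E2 $$ (i',j)) + (\<Sum>j\<in>{0..<n}. (if i' = j then real k * p else 0))"
      using i' by (simp add: ent sum.distrib)
    also have "\<dots> = real k * p" using i' lap_rowsum[OF g2 i'(2)] by simp
    finally have 1: "(\<Sum>j\<in>{0..<n}. ?S $$ (i,n+j)) = real k * p" .
    have "(\<Sum>j\<in>{0..<n}. ?S $$ (i,j)) = (\<Sum>j\<in>{0..<n}. - p * B $$ (j,i'))"
      using i' by (intro sum.cong refl) (simp add: ent)
    also have "\<dots> = - p * real k" using B_props(4)[OF Bk i'(2)] sum_distrib_left[of "-p" "\<lambda>j. B $$ (j,i')" "{0..<n}"] by simp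
    finally show ?thesis using 1 by simp
  qed
  finally show "(?S *\<^sub>v vec (n+n) (\<lambda>_. 1)) $ i = 0\<^sub>v (n+n) $ i" using i by simp
qed (use supra_carrier[OF Q1c Q2c Bc, of k p] in simp)

lemma halves:
  fixes u :: "real vec"
  assumes u: "u \<in> carrier_vec (n+n)"
  shows "u \<bullet> vec (n+n) (\<lambda>_. 1) = (\<Sum>i\<in>{0..<n}. vec n (\<lambda>i. u$i) $ i) + (\<Sum>i\<in>{0..<n}. vec n (\<lambda>i. u$(n+i)) $ i)"
    "u \<bullet> u = vec n (\<lambda>i. u$i) \<bullet> vec n (\<lambda>i. u$i) + vec n (\<lambda>i. u$(n+i)) \<bullet> vec n (\<lambda>i. u$(n+i))"
proof -
  have "u \<bullet> vec (n+n) (\<lambda>_. 1) = (\<Sum>i\<in>{0..<n+n}. u$i)" by (auto simp: scalar_prod_def intro!: sum.cong)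
  also have "\<dots> = (\<Sum>i\<in>{0..<n}. u$i) + (\<Sum>i\<in>{0..<n}. u$(n+i))" by (rule split_sum)
  finally show "u \<bullet> vec (n+n) (\<lambda>_. 1) = (\<Sum>i\<in>{0..<n}. vec n (\<lambda>i. u$i) $ i) + (\<Sum>i\<in>{0..<n}. vec n (\<lambda>i. u$(n+i)) $ i)"
    by simp
  have "u \<bullet> u = (\<Sum>i\<in>{0..<n+n}. u$i * u$i)" using u by (simp add: scalar_prod_def)
  also have "\<dots> = (\<Sum>i\<in>{0..<n}. u$i * u$i) + (\<Sum>i\<in>{0..<n}. u$(n+i) * u$(n+i))" by (rule split_sum)
  finally show "u \<bullet> u = vec n (\<lambda>i. u$i) \<bullet> vec n (\<lambda>i. u$i) + vec n (\<lambda>i. u$(n+i)) \<bullet> vec n (\<lambda>i. u$(n+i))"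
    by (simp add: scalar_prod_def)
qed

lemma key_lower:
  assumes p: "0 < p"
    and pm: "2 * real k * p \<le> min (second_smallest_eig (laplacian n E1)) (second_smallest_eig (laplacian n E2))"
  shows "second_smallest_eig (supra_laplacian k (laplacian n E1) (laplacian n E2) B p) = 2 * real k * p"
proof -
  let ?Q1 = "laplacian n E1" and ?Q2 = "laplacian n E2"
  let ?S = "supra_laplacian k ?Q1 ?Q2 B p"
  let ?o = "vec (n+n) (\<lambda>_. 1::real)"
  define m where "m = min (second_smallest_eig ?Q1) (second_smallest_eig ?Q2)"
  have Sc: "?S \<in> carrier_mat (n+n) (n+n)" by (rule supra_carrier[OF Q1c Q2c Bc])
  have Ssym: "transpose_mat ?S = ?S"
    by (rule supra_sym[OF Q1c Q2c Bc lap_sym[OF g1] lap_sym[OF g2]])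
  have N2: "2 \<le> n + n" using n2 by simp
  have o: "?o \<in> carrier_vec (n+n)" by simp
  have o0: "?o \<noteq> 0\<^sub>v (n+n)"
  proof
    assume "?o = 0\<^sub>v (n+n)"
    then have "?o $ 0 = (0\<^sub>v (n+n) :: real vec) $ 0" by simp
    then show False using n2 by simp
  qed
  have n0: "0 < real n" using n2 by simp
  have ge: "2 * real k * p \<le> second_smallest_eig ?S"
  proof (rule lemL1[OF Sc Ssym N2 o])
    fix u assume u: "u \<in> carrier_vec (n+n)" and uo: "u \<bullet> ?o = 0"
    define a where "a = vec n (\<lambda>i. u$i)"
    define b where "b = vec n (\<lambda>i. u$(n+i))"
    have a: "a \<in> carrier_vec n" and b: "b \<in> carrier_vec n" unfolding a_def b_def by auto
    define s where "s = (\<Sum>i\<in>{0..<n}. a$i)"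
    define t where "t = (\<Sum>i\<in>{0..<n}. b$i)"
    have st: "t = - s" using halves(1)[OF u] uo unfolding s_def t_def a_def b_def by simp
    have uu: "u \<bullet> u = a \<bullet> a + b \<bullet> b" using halves(2)[OF u] unfolding a_def b_def .
    have qf: "u \<bullet> (?S *\<^sub>v u) = a \<bullet> (?Q1 *\<^sub>v a) + b \<bullet> (?Q2 *\<^sub>v b)
       + p * (real k * (a \<bullet> a) + real k * (b \<bullet> b) - 2 * (a \<bullet> (B *\<^sub>v b)))"
      unfolding a_def b_def by (rule supra_qf[OF Q1c Q2c Bc u])
    have la: "m * (a \<bullet> a - s^2 / real n) \<le> a \<bullet> (?Q1 *\<^sub>v a)"
      unfolding s_def by (rule lap_bound[OF g1 n2 a]) (simp add: m_def)
    have lb: "m * (b \<bullet> b - s^2 / real n) \<le> b \<bullet> (?Q2 *\<^sub>v b)"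
      using lap_bound[OF g2 n2 b, of m] st unfolding t_def by (simp add: m_def)
    have f3: "2 * (2 * s / real n) * real k * (s - t) - (2 * s / real n) * (2 * s / real n) * real n * real k
        \<le> real k * (a \<bullet> a) + real k * (b \<bullet> b) - 2 * (a \<bullet> (B *\<^sub>v b))"
      using F3[OF Bk a b, of "2 * s / real n"] unfolding s_def t_def .
    have f3': "4 * real k * s^2 / real n \<le> real k * (a \<bullet> a) + real k * (b \<bullet> b) - 2 * (a \<bullet> (B *\<^sub>v b))"
    proof -
      have "2 * (2 * s / real n) * real k * (s - t) - (2 * s / real n) * (2 * s / real n) * real n * real k
          = 4 * real k * s^2 / real n"
        using st n0 by (simp add: field_simps power2_eq_square)
      then show ?thesis using f3 by simp
    qed
    have va: "0 \<le> a \<bullet> a - s^2 / real n"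
      using var_nonneg[of n "\<lambda>i. a$i"] n2 a unfolding s_def by (simp add: scalar_prod_def)
    have vb: "0 \<le> b \<bullet> b - s^2 / real n"
      using var_nonneg[of n "\<lambda>i. b$i"] n2 b st unfolding t_def by (simp add: scalar_prod_def)
    have m1: "2 * real k * p * (a \<bullet> a - s^2 / real n) \<le> m * (a \<bullet> a - s^2 / real n)"
      using pm va unfolding m_def by (intro mult_right_mono) auto
    have m2: "2 * real k * p * (b \<bullet> b - s^2 / real n) \<le> m * (b \<bullet> b - s^2 / real n)"
      using pm vb unfolding m_def by (intro mult_right_mono) auto
    have m3: "p * (4 * real k * s^2 / real n) \<le> p * (real k * (a \<bullet> a) + real k * (b \<bullet> b) - 2 * (a \<bullet> (B *\<^sub>v b)))"
      using f3' p by (intro mult_left_mono) auto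
    have eq: "2 * real k * p * (a \<bullet> a - s^2 / real n) + 2 * real k * p * (b \<bullet> b - s^2 / real n)
        + p * (4 * real k * s^2 / real n) = 2 * real k * p * (a \<bullet> a + b \<bullet> b)"
      using n0 by (simp add: field_simps)
    show "2 * real k * p * (u \<bullet> u) \<le> u \<bullet> (?S *\<^sub>v u)"
      unfolding qf uu using m1 m2 m3 la lb eq by linarith
  qed
  have le: "second_smallest_eig ?S \<le> 2 * real k * p"
  proof -
    define w where "w = vec (n+n) (\<lambda>i. if i < n then 1 else (-1::real))"
    have w: "w \<in> carrier_vec (n+n)" unfolding w_def by simp
    have w0: "w \<noteq> 0\<^sub>v (n+n)"
    proof
      assume "w = 0\<^sub>v (n+n)"
      then have "w $ 0 = (0\<^sub>v (n+n) :: real vec) $ 0" by simp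
      then show False using n2 unfolding w_def by simp
    qed
    have a1: "vec n (\<lambda>i. w$i) = vec n (\<lambda>_. 1)" unfolding w_def by (rule eq_vecI) auto
    have b1: "vec n (\<lambda>i. w$(n+i)) = vec n (\<lambda>_. -1)" unfolding w_def by (rule eq_vecI) auto
    have wo: "w \<bullet> ?o = 0" using halves(1)[OF w] unfolding a1 b1 by simp
    have ww: "w \<bullet> w = 2 * real n" using halves(2)[OF w] unfolding a1 b1 by (simp add: scalar_prod_def)
    have q1: "vec n (\<lambda>_. 1) \<bullet> (?Q1 *\<^sub>v vec n (\<lambda>_. 1)) = 0"
      using lap_ones[OF g1] by simp
    have q2: "vec n (\<lambda>_. -1) \<bullet> (?Q2 *\<^sub>v vec n (\<lambda>_. -1)) = 0"
      using lap_qf[OF g2, of "vec n (\<lambda>_. -1)"] by simp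
    have bb: "vec n (\<lambda>_. 1) \<bullet> (B *\<^sub>v vec n (\<lambda>_. -1)) = - (real n * real k)"
    proof -
      have "vec n (\<lambda>_. 1) \<bullet> (B *\<^sub>v vec n (\<lambda>_. -1)) = (\<Sum>i\<in>{0..<n}. \<Sum>j\<in>{0..<n}. - B$$(i,j))"
        using bil[OF Bc, of "vec n (\<lambda>_. 1)" "vec n (\<lambda>_. -1)"] by simp
      also have "\<dots> = (\<Sum>i\<in>{0..<n}. - real k)"
        using B_props(3)[OF Bk] by (intro sum.cong refl) (simp add: sum_negf)
      finally show ?thesis by simp
    qed
    have "w \<bullet> (?S *\<^sub>v w) = p * (real k * real n + real k * real n + 2 * (real n * real k))"
      using supra_qf[OF Q1c Q2c Bc w, of k p] unfolding a1 b1 q1 q2 bb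
      by (simp add: scalar_prod_def)
    also have "\<dots> = 2 * real k * p * (w \<bullet> w)" unfolding ww by (simp add: algebra_simps)
    finally have "w \<bullet> (?S *\<^sub>v w) \<le> 2 * real k * p * (w \<bullet> w)" by simp
    then show ?thesis
      by (rule lemL2[OF Sc Ssym N2 o o0 supra_ones w w0 wo]) (use p in simp)
  qed
  show ?thesis using ge le by simp
qed

lemma bounded:
  "\<exists>P. \<forall>p. 0 < p \<and> second_smallest_eig (supra_laplacian k (laplacian n E1) (laplacian n E2) B p) = 2 * real k * p \<longrightarrow> p \<le> P"
proof -
  let ?Q1 = "laplacian n E1" and ?Q2 = "laplacian n E2"
  let ?o = "vec (n+n) (\<lambda>_. 1::real)"
  define a where "a = vec n (\<lambda>i. if i = 0 then 1 else if i = 1 then -1 else (0::real))"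
  have a: "a \<in> carrier_vec n" unfolding a_def by simp
  define \<beta> where "\<beta> = a \<bullet> (B *\<^sub>v a)"
  define \<sigma> where "\<sigma> = (if 0 \<le> \<beta> then 1 else (-1::real))"
  define b where "b = vec n (\<lambda>i. \<sigma> * a$i)"
  have b: "b \<in> carrier_vec n" unfolding b_def by simp
  define w where "w = vec (n+n) (\<lambda>i. if i < n then a$i else \<sigma> * a$(i-n))"
  have w: "w \<in> carrier_vec (n+n)" unfolding w_def by simp
  have aw: "vec n (\<lambda>i. w$i) = a" unfolding w_def a_def by (rule eq_vecI) auto
  have bw: "vec n (\<lambda>i. w$(n+i)) = b" unfolding w_def b_def by (rule eq_vecI) auto
  have n01: "0 < n" "1 < n" "(0::nat) \<noteq> 1" using n2 by auto
  have ai: "\<And>i. i < n \<Longrightarrow> a$i = (if i = 0 then 1 else if i = 1 then -1 else 0)" unfolding a_def by simp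
  have suma: "(\<Sum>i\<in>{0..<n}. a$i) = 0"
  proof -
    have "(\<Sum>i\<in>{0..<n}. a$i) = (\<Sum>i\<in>{0..<n}. (if i = 0 then 1 else if i = 1 then -1 else 0) * (1::real))"
      using ai by (intro sum.cong refl) auto
    also have "\<dots> = 0" using sum_two[OF n01, of 1 "-1" "\<lambda>_. 1"] by simp
    finally show ?thesis .
  qed
  have aa: "a \<bullet> a = 2"
  proof -
    have "a \<bullet> a = (\<Sum>i\<in>{0..<n}. (if i = 0 then 1 else if i = 1 then -1 else 0) * a$i)"
      using ai a by (auto simp: scalar_prod_def intro!: sum.cong)
    also have "\<dots> = 2" using sum_two[OF n01, of 1 "-1" "\<lambda>i. a$i"] ai n01 by simp
    finally show ?thesis .
  qed
  have ss: "\<sigma> * \<sigma> = 1" unfolding \<sigma>_def by simp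
  have bb: "b \<bullet> b = 2"
  proof -
    have "b \<bullet> b = \<sigma> * \<sigma> * (a \<bullet> a)"
      unfolding b_def using a by (simp add: scalar_prod_def sum_distrib_left algebra_simps)
    then show ?thesis using ss aa by simp
  qed
  have sumb: "(\<Sum>i\<in>{0..<n}. b$i) = 0"
  proof -
    have "(\<Sum>i\<in>{0..<n}. b$i) = (\<Sum>i\<in>{0..<n}. \<sigma> * a$i)" unfolding b_def by simp
    then show ?thesis using suma by (simp add: sum_distrib_left[symmetric])
  qed
  have aBb: "a \<bullet> (B *\<^sub>v b) = \<sigma> * \<beta>"
  proof -
    have "a \<bullet> (B *\<^sub>v b) = (\<Sum>i\<in>{0..<n}. \<Sum>j\<in>{0..<n}. a$i * B$$(i,j) * b$j)" by (rule bil[OF Bc a b])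
    also have "\<dots> = (\<Sum>i\<in>{0..<n}. \<Sum>j\<in>{0..<n}. \<sigma> * (a$i * B$$(i,j) * a$j))"
      unfolding b_def by (intro sum.cong refl) auto
    also have "\<dots> = \<sigma> * \<beta>" unfolding \<beta>_def bil[OF Bc a a] by (simp add: sum_distrib_left)
    finally show ?thesis .
  qed
  have sb: "0 \<le> \<sigma> * \<beta>" unfolding \<sigma>_def by simp
  have wo: "w \<bullet> ?o = 0" using halves(1)[OF w] unfolding aw bw suma sumb by simp
  have ww: "w \<bullet> w = 4" using halves(2)[OF w] unfolding aw bw aa bb by simp
  have w0: "w \<noteq> 0\<^sub>v (n+n)"
  proof
    assume "w = 0\<^sub>v (n+n)"
    then have "w \<bullet> w = 0" by simp
    then show False using ww by simp
  qed
  define C where "C = a \<bullet> (?Q1 *\<^sub>v a) + b \<bullet> (?Q2 *\<^sub>v b)"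
  have qf: "w \<bullet> (supra_laplacian k ?Q1 ?Q2 B p *\<^sub>v w) = C + p * (4 * real k - 2 * (\<sigma> * \<beta>))" for p
    using supra_qf[OF Q1c Q2c Bc w, of k p] unfolding aw bw aa bb aBb C_def by (simp add: algebra_simps)
  have N2: "2 \<le> n + n" using n2 by simp
  have o: "?o \<in> carrier_vec (n+n)" by simp
  have o0: "?o \<noteq> 0\<^sub>v (n+n)"
  proof
    assume "?o = 0\<^sub>v (n+n)"
    then have "?o $ 0 = (0\<^sub>v (n+n) :: real vec) $ 0" by simp
    then show False using n2 by simp
  qed
  have kpos: "0 < real k" using k1 by simp
  show ?thesis
  proof (intro exI[of _ "\<bar>C\<bar> / (4 * real k)"] allI impI)
    fix p assume hp: "0 < p \<and> second_smallest_eig (supra_laplacian k ?Q1 ?Q2 B p) = 2 * real k * p"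
    then have p: "0 < p" and eig: "second_smallest_eig (supra_laplacian k ?Q1 ?Q2 B p) = 2 * real k * p" by auto
    show "p \<le> \<bar>C\<bar> / (4 * real k)"
    proof (rule ccontr)
      assume "\<not> p \<le> \<bar>C\<bar> / (4 * real k)"
      then have "\<bar>C\<bar> < 4 * real k * p" using kpos by (simp add: field_simps)
      define c where "c = max 0 ((C + p * (4 * real k - 2 * (\<sigma> * \<beta>))) / 4)"
      have Sc: "supra_laplacian k ?Q1 ?Q2 B p \<in> carrier_mat (n+n) (n+n)"
        by (rule supra_carrier[OF Q1c Q2c Bc])
      have Ssym: "transpose_mat (supra_laplacian k ?Q1 ?Q2 B p) = supra_laplacian k ?Q1 ?Q2 B p"
        by (rule supra_sym[OF Q1c Q2c Bc lap_sym[OF g1] lap_sym[OF g2]])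
      have hw: "w \<bullet> (supra_laplacian k ?Q1 ?Q2 B p *\<^sub>v w) \<le> c * (w \<bullet> w)"
        unfolding qf ww c_def by (rule max4)
      have "second_smallest_eig (supra_laplacian k ?Q1 ?Q2 B p) \<le> c"
        by (rule lemL2[OF Sc Ssym N2 o o0 supra_ones w w0 wo hw]) (simp add: c_def)
      moreover have "c < 2 * real k * p"
      proof -
        have "0 < 2 * real k * p" using kpos p by simp
        moreover have "p * (2 * (\<sigma> * \<beta>)) \<ge> 0" using p sb by simp
        then have "(C + p * (4 * real k - 2 * (\<sigma> * \<beta>))) / 4 < 2 * real k * p"
          using \<open>\<bar>C\<bar> < 4 * real k * p\<close> by (simp add: algebra_simps)
        ultimately show ?thesis unfolding c_def by simp
      qed
      ultimately show False using eig by simp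
    qed
  qed
qed

end


theorem mainTheorem3:
  fixes n k :: nat and E1 E2 :: "nat \<Rightarrow> nat \<Rightarrow> bool" and B :: "real mat"
  assumes "n \<ge> 2"
    and "simple_graph n E1" and "simple_graph n E2"
    and "1 \<le> k" and "k \<le> n"
    and "k_regular_01 n k B"
  shows "transition_threshold k (laplacian n E1) (laplacian n E2) B
           \<ge> min (second_smallest_eig (laplacian n E1)) (second_smallest_eig (laplacian n E2)) / (2 * real k)"
proof -
  let ?T = "{0} \<union> {p. p > 0 \<and> second_smallest_eig (supra_laplacian k (laplacian n E1) (laplacian n E2) B p) = 2 * real k * p}"
  define m where "m = min (second_smallest_eig (laplacian n E1)) (second_smallest_eig (laplacian n E2))"
  obtain P where P: "\<And>p. 0 < p \<and> second_smallest_eig (supra_laplacian k (laplacian n E1) (laplacian n E2) B p) = 2 * real k * p \<Longrightarrow> p \<le> P"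
    using bounded[OF assms(1,2,3,4,6)] by blast
  have bdd: "bdd_above ?T"
  proof (rule bdd_aboveI[of _ "max 0 P"])
    fix x assume "x \<in> ?T"
    then have "x = 0 \<or> x \<le> P" using P by blast
    then show "x \<le> max 0 P" by auto
  qed
  have T0: "0 \<in> ?T" by simp
  have kpos: "0 < real k" using assms(4) by simp
  have "m / (2 * real k) \<le> Sup ?T"
  proof (cases "m \<le> 0")
    case True
    then have "m / (2 * real k) \<le> 0" using kpos by (simp add: divide_nonpos_pos)
    also have "0 \<le> Sup ?T" by (rule cSup_upper[OF T0 bdd])
    finally show ?thesis .
  next
    case False
    define p0 where "p0 = m / (2 * real k)"
    have p0: "0 < p0" unfolding p0_def using False kpos by simp
    have "2 * real k * p0 = m" unfolding p0_def using kpos by simp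
    then have "second_smallest_eig (supra_laplacian k (laplacian n E1) (laplacian n E2) B p0) = 2 * real k * p0"
      by (intro key_lower[OF assms(1,2,3,4,6) p0]) (simp add: m_def)
    then have "p0 \<in> ?T" using p0 by simp
    then show ?thesis unfolding p0_def[symmetric] by (rule cSup_upper[OF _ bdd])
  qed
  then show ?thesis unfolding transition_threshold_def m_def by simp
qed


end
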